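(* Let $l>0$, $h=ld^{-1/2}$, and let $(X_t,Y_t)$ be a pair of RWM chains targeting $\mathcal{N}_d(0,I_d)$ under any Markovian coupling. Conditional on $\frac1d(\lVert X_t\rVert^2,\lVert Y_t\rVert^2,X_t^\top Y_t)=(x,y,v)$, $$\lim_{d\to\infty}\mathbb{E}\big[hY_t^\top Z_xB_x\big]=-vl^2e^{l^2(x-1)/2}\Phi\big(l/(2x^{1/2})-lx^{1/2}\big),\qquad \lim_{d\to\infty}\mathbb{E}\big[hX_t^\top Z_yB_y\big]=-vl^2e^{l^2(y-1)/2}\Phi\big(l/(2y^{1/2})-ly^{1/2}\big).$$ Moreover, both convergences are uniform over $(x,y,v)\in\mathcal{S}(X,Y)$, for every fixed $X,Y>0$.
   Context: RWM updates: $X_{t+1}=X_t+hZ_xB_x$, $Y_{t+1}=Y_t+hZ_yB_y$ with $B_x=\mathbb{1}\{U_x\le\exp(-hX_t^\top Z_x-h^2\lVert Z_x\rVert^2/2)\}$, $B_y=\mathbb{1}\{U_y\le\exp(-hY_t^\top Z_y-h^2\lVert Z_y\rVert^2/2)\}$, where $Z_x\sim\mathcal{N}_d(0,I_d)$ and $U_x\sim\mathrm{Unif}(0,1)$ are independent (similarly $Z_y,U_y$). $\Phi$ is the standard normal cdf. $\mathcal{S}(X,Y)=\{(x,y,v):x\in[0,X],y\in[0,Y],|v|\le\sqrt{xy}\}$. *)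

theory Defs
  imports "HOL-Probability.Probability"
begin

text \<open>Vectors of R^d are represented as functions nat => real, only the
coordinates i < d being relevant.\<close>

definition innerd :: "nat \<Rightarrow> (nat \<Rightarrow> real) \<Rightarrow> (nat \<Rightarrow> real) \<Rightarrow> real" where
  "innerd d a b = (\<Sum>i<d. a i * b i)"

definition std_normal :: "real measure" where
  "std_normal = density lborel std_normal_density"

definition Phi :: "real \<Rightarrow> real" where
  "Phi t = measure std_normal {..t}"

definition gauss :: "nat \<Rightarrow> (nat \<Rightarrow> real) measure" where
  "gauss d = PiM {..<d} (\<lambda>_. std_normal)"

definition unif01 :: "real measure" where
  "unif01 = uniform_measure lborel {0<..<1}"

text \<open>The proposal noise (Z, U) of one RWM chain: Z ~ N_d(0,I_d) independent of U ~ Unif(0,1).\<close>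
definition noise :: "nat \<Rightarrow> ((nat \<Rightarrow> real) \<times> real) measure" where
  "noise d = gauss d \<Otimes>\<^sub>M unif01"

text \<open>A (Markovian) coupling at the current state: any probability law of
((Z_x,U_x),(Z_y,U_y)) whose two marginals are the noise laws.\<close>
definition coupling :: "nat \<Rightarrow> (((nat \<Rightarrow> real) \<times> real) \<times> ((nat \<Rightarrow> real) \<times> real)) measure \<Rightarrow> bool" where
  "coupling d K \<longleftrightarrow> prob_space K \<and> sets K = sets (noise d \<Otimes>\<^sub>M noise d)
     \<and> distr K (noise d) fst = noise d \<and> distr K (noise d) snd = noise d"

definition accept :: "nat \<Rightarrow> real \<Rightarrow> (nat \<Rightarrow> real) \<Rightarrow> (nat \<Rightarrow> real) \<times> real \<Rightarrow> real" where
  "accept d h a zu = (if snd zu \<le> exp (- h * innerd d a (fst zu) - h\<^sup>2 * innerd d (fst zu) (fst zu) / 2)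
                      then 1 else 0)"

definition Sset :: "real \<Rightarrow> real \<Rightarrow> (real \<times> real \<times> real) set" where
  "Sset X Y = {(x, y, v). x \<in> {0..X} \<and> y \<in> {0..Y} \<and> \<bar>v\<bar> \<le> sqrt (x * y)}"

definition limfun :: "real \<Rightarrow> real \<Rightarrow> real \<Rightarrow> real" where
  "limfun l x v = - v * l\<^sup>2 * exp (l\<^sup>2 * (x - 1) / 2) * Phi (l / (2 * sqrt x) - l * sqrt x)"

end

theory Submission
  imports Defs "HOL-Real_Asymp.Real_Asymp" "HOL-Library.Quadratic_Discriminant"
begin


lemma std_normal_integral:
  assumes "f \<in> borel_measurable borel"
  shows "(\<integral>w. f w \<partial>std_normal) = (\<integral>w. std_normal_density w * f w \<partial>lborel)"
  unfolding std_normal_def using assms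
  by (subst integral_density) auto

lemma std_normal_integrable:
  assumes "f \<in> borel_measurable borel"
  shows "integrable std_normal f \<longleftrightarrow> integrable lborel (\<lambda>w. std_normal_density w * f w)"
  unfolding std_normal_def using assms
  by (subst integrable_density) auto

lemma stein1:
  fixes g g' :: "real \<Rightarrow> real" and S :: "real set" and B cA cB :: real
  assumes S: "finite S" and cont: "continuous_on UNIV g"
   and der: "\<And>w. w \<notin> S \<Longrightarrow> (g has_real_derivative g' w) (at w)"
   and gb: "\<And>w. \<bar>g w\<bar> \<le> B"
   and g'm: "g' \<in> borel_measurable borel"
   and g'b: "\<And>w. \<bar>g' w\<bar> \<le> cA + cB * \<bar>w\<bar>"
  shows "(\<integral>w. w * g w \<partial>std_normal) = (\<integral>w. g' w \<partial>std_normal)"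
proof -
  define \<psi> where "\<psi> = std_normal_density"
  have gm[measurable]: "g \<in> borel_measurable borel" using cont by (rule borel_measurable_continuous_onI)
  note [measurable] = g'm
  define H where "H w = \<psi> w * g' w - w * \<psi> w * g w" for w
  have psi_m[measurable]: "\<psi> \<in> borel_measurable borel" unfolding \<psi>_def by simp
  have Hm[measurable]: "H \<in> borel_measurable borel" unfolding H_def by measurable
  have i0: "integrable lborel (\<lambda>w. \<psi> w * \<bar>w\<bar>^k)" for k
    unfolding \<psi>_def by (rule integrable_std_normal_moment_abs)
  have B0: "0 \<le> B" using gb[of 0] by linarith
  have int1: "integrable lborel (\<lambda>w. \<psi> w * g' w)"
  proof (rule Bochner_Integration.integrable_bound[where f="\<lambda>w. cA * (\<psi> w * \<bar>w\<bar>^0) + cB * (\<psi> w * \<bar>w\<bar>^1)"])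
    show "integrable lborel (\<lambda>w. cA * (\<psi> w * \<bar>w\<bar>^0) + cB * (\<psi> w * \<bar>w\<bar>^1))"
      by (intro Bochner_Integration.integrable_add integrable_mult_right i0)
    show "AE x in lborel. norm (\<psi> x * g' x) \<le> norm (cA * (\<psi> x * \<bar>x\<bar> ^ 0) + cB * (\<psi> x * \<bar>x\<bar> ^ 1))"
    proof (rule AE_I2)
      fix x
      have p: "0 \<le> \<psi> x" unfolding \<psi>_def by simp
      have "norm (\<psi> x * g' x) = \<psi> x * \<bar>g' x\<bar>" using p by (simp add: abs_mult)
      also have "\<dots> \<le> \<psi> x * (cA + cB * \<bar>x\<bar>)" using p g'b[of x] by (simp add: mult_left_mono)
      also have "\<dots> \<le> norm (cA * (\<psi> x * \<bar>x\<bar> ^ 0) + cB * (\<psi> x * \<bar>x\<bar> ^ 1))" by (simp add: algebra_simps)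
      finally show "norm (\<psi> x * g' x) \<le> norm (cA * (\<psi> x * \<bar>x\<bar> ^ 0) + cB * (\<psi> x * \<bar>x\<bar> ^ 1))" .
    qed
  qed measurable
  have int2: "integrable lborel (\<lambda>w. w * \<psi> w * g w)"
  proof (rule Bochner_Integration.integrable_bound[where f="\<lambda>w. B * (\<psi> w * \<bar>w\<bar>^1)"])
    show "integrable lborel (\<lambda>w. B * (\<psi> w * \<bar>w\<bar>^1))" by (intro integrable_mult_right i0)
    show "AE x in lborel. norm (x * \<psi> x * g x) \<le> norm (B * (\<psi> x * \<bar>x\<bar>^1))"
    proof (rule AE_I2)
      fix x
      have p: "0 \<le> \<psi> x" unfolding \<psi>_def by simp
      have "norm (x * \<psi> x * g x) = (\<psi> x * \<bar>x\<bar>) * \<bar>g x\<bar>" using p by (simp add: abs_mult)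
      also have "\<dots> \<le> (\<psi> x * \<bar>x\<bar>) * B" using p gb[of x] by (intro mult_left_mono) auto
      also have "\<dots> \<le> norm (B * (\<psi> x * \<bar>x\<bar>^1))" using p B0 by (simp add: abs_mult)
      finally show "norm (x * \<psi> x * g x) \<le> norm (B * (\<psi> x * \<bar>x\<bar>^1))" .
    qed
  qed measurable
  have intH: "integrable lborel H" unfolding H_def using int1 int2 by auto
  define r where "r n = \<psi> (real n) * g (real n) - \<psi> (- real n) * g (- real n)" for n :: nat
  have ftc: "(H has_integral r n) {- real n .. real n}" for n
  proof -
    have "(H has_integral ((\<lambda>w. \<psi> w * g w) (real n) - (\<lambda>w. \<psi> w * g w) (- real n))) {- real n .. real n}"
    proof (rule fundamental_theorem_of_calculus_interior_strong[OF S])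
      show "- real n \<le> real n" by simp
      show "continuous_on {- real n..real n} (\<lambda>w. \<psi> w * g w)"
        unfolding \<psi>_def normal_density_def
        by (intro continuous_intros continuous_on_subset[OF cont]) auto
      fix x assume "x \<in> {- real n<..<real n} - S"
      then have "x \<notin> S" by auto
      have dpsi: "(\<psi> has_real_derivative (- x * \<psi> x)) (at x)"
      proof -
        have "((\<lambda>w. exp (- w\<^sup>2 / 2)) has_real_derivative (- x * exp (- x\<^sup>2 / 2))) (at x)"
          by (auto intro!: derivative_eq_intros)
        from DERIV_cmult[OF this, of "1 / sqrt (2 * pi)"] show ?thesis
          unfolding \<psi>_def std_normal_density_def by (simp add: mult_ac)
      qed
      show "((\<lambda>w. \<psi> w * g w) has_vector_derivative H x) (at x)"
        unfolding has_real_derivative_iff_has_vector_derivative[symmetric] H_def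
        using DERIV_mult[OF dpsi der[OF \<open>x \<notin> S\<close>]] by (simp add: algebra_simps)
    qed
    then show ?thesis by (simp add: r_def)
  qed
  have lint: "(\<integral>w. indicator {- real n .. real n} w * H w \<partial>lborel) = r n" for n
  proof -
    have ii: "integrable lborel (\<lambda>w. indicator {- real n .. real n} w * H w)"
      using integrable_real_mult_indicator[OF _ intH, of "{- real n .. real n}"] by (simp add: mult_ac)
    have "(H has_integral (\<integral>w. indicator {- real n .. real n} w * H w \<partial>lborel)) {- real n .. real n}"
    proof -
      have eqf: "(\<lambda>w. indicator {- real n .. real n} w * H w) = (\<lambda>x. if x \<in> {- real n .. real n} then H x else 0)"
        by (auto simp: indicator_def)
      show ?thesis using has_integral_integral_lborel[OF ii] unfolding eqf has_integral_restrict_UNIV .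
    qed
    then show ?thesis using ftc[of n] by (rule has_integral_unique)
  qed
  have lim1: "(\<lambda>n. \<integral>w. indicator {- real n .. real n} w * H w \<partial>lborel) \<longlonglongrightarrow> (\<integral>w. H w \<partial>lborel)"
  proof (rule integral_dominated_convergence[where w="\<lambda>w. \<bar>H w\<bar>"])
    show "integrable lborel (\<lambda>w. \<bar>H w\<bar>)" using intH by auto
    show "AE x in lborel. (\<lambda>n. indicator {- real n..real n} x * H x) \<longlonglongrightarrow> H x"
    proof (rule AE_I2)
      fix x :: real
      obtain N :: nat where "\<bar>x\<bar> \<le> real N" using real_nat_ceiling_ge by blast
      then have "\<forall>n\<ge>N. indicator {- real n..real n} x * H x = H x"
        by (auto simp: indicator_def)
      then show "(\<lambda>n. indicator {- real n..real n} x * H x) \<longlonglongrightarrow> H x"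
        by (intro tendsto_eventually) (auto simp: eventually_sequentially)
    qed
    show "AE x in lborel. norm (indicator {- real n..real n} x * H x) \<le> \<bar>H x\<bar>" for n
      by (auto simp: indicator_def)
  qed measurable
  have psilim: "(\<lambda>n. \<psi> (real n)) \<longlonglongrightarrow> 0"
    unfolding \<psi>_def std_normal_density_def by real_asymp
  have rlim: "r \<longlonglongrightarrow> 0"
  proof -
    have bnd: "norm (r n) \<le> 2 * B * \<psi> (real n)" for n
    proof -
      have p: "0 \<le> \<psi> (real n)" "\<psi> (- real n) = \<psi> (real n)" unfolding \<psi>_def std_normal_density_def by auto
      have "\<bar>r n\<bar> \<le> \<bar>\<psi> (real n) * g (real n)\<bar> + \<bar>\<psi> (real n) * g (- real n)\<bar>"
        unfolding r_def p(2) by (rule abs_triangle_ineq4)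
      also have "\<dots> = \<psi> (real n) * \<bar>g (real n)\<bar> + \<psi> (real n) * \<bar>g (- real n)\<bar>"
        using p by (simp add: abs_mult)
      also have "\<dots> \<le> \<psi> (real n) * B + \<psi> (real n) * B"
        using p gb by (intro add_mono mult_left_mono) auto
      finally show ?thesis by simp
    qed
    have "(\<lambda>n. 2 * B * \<psi> (real n)) \<longlonglongrightarrow> 0"
      using tendsto_mult_right_zero[OF psilim, of "2 * B"] by simp
    then show ?thesis
      by (rule Lim_null_comparison[OF always_eventually, rotated]) (use bnd in blast)
  qed
  have H0: "(\<integral>w. H w \<partial>lborel) = 0"
  proof -
    have "(\<lambda>n. \<integral>w. indicator {- real n .. real n} w * H w \<partial>lborel) = r" using lint by (rule ext)
    then show ?thesis using LIMSEQ_unique[OF lim1] rlim by simp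
  qed
  have "(\<integral>w. H w \<partial>lborel) = (\<integral>w. \<psi> w * g' w \<partial>lborel) - (\<integral>w. w * \<psi> w * g w \<partial>lborel)"
    unfolding H_def using int1 int2 by simp
  then have eq: "(\<integral>w. \<psi> w * g' w \<partial>lborel) = (\<integral>w. \<psi> w * (w * g w) \<partial>lborel)"
    using H0 by (simp add: mult_ac)
  show ?thesis
    by (subst (1 2) std_normal_integral) (use eq in \<open>auto simp: \<psi>_def\<close>)
qed



definition G0 :: "real \<Rightarrow> real" where "G0 t = min 1 (exp (- t))"
definition FF :: "real \<Rightarrow> real" where "FF t = (if 0 \<le> t then exp (- t) else 0)"

lemma G0_m[measurable]: "G0 \<in> borel_measurable borel" unfolding G0_def by measurable
lemma FF_m[measurable]: "FF \<in> borel_measurable borel" unfolding FF_def by measurable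
lemma G0_bnd: "0 \<le> G0 t" "G0 t \<le> 1" unfolding G0_def by auto
lemma FF_bnd: "0 \<le> FF t" "FF t \<le> 1" unfolding FF_def by auto

lemma prob_std_normal: "prob_space std_normal"
  unfolding std_normal_def by (rule prob_space_normal_density) simp

lemma sets_std_normal[simp, measurable_cong]: "sets std_normal = sets borel"
  unfolding std_normal_def by simp
lemma space_std_normal[simp]: "space std_normal = UNIV"
  unfolding std_normal_def by simp

lemma stein_quad:
  fixes \<alpha> \<beta> \<gamma> :: real
  assumes \<beta>: "\<beta> > 0"
  shows "(\<integral>w. w * G0 (\<alpha> * w + \<beta> * w\<^sup>2 + \<gamma>) \<partial>std_normal)
       = (\<integral>w. - (\<alpha> + 2 * \<beta> * w) * FF (\<alpha> * w + \<beta> * w\<^sup>2 + \<gamma>) \<partial>std_normal)"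
proof -
  define q where "q w = \<alpha> * w + \<beta> * w\<^sup>2 + \<gamma>" for w
  define S where "S = {w. q w = 0}"
  have finS: "finite S"
  proof (rule finite_subset)
    show "S \<subseteq> {(-\<alpha> + sqrt (discrim \<beta> \<alpha> \<gamma>)) / (2 * \<beta>), (-\<alpha> - sqrt (discrim \<beta> \<alpha> \<gamma>)) / (2 * \<beta>)}"
    proof
      fix w assume "w \<in> S"
      then have "\<beta> * w\<^sup>2 + \<alpha> * w + \<gamma> = 0" by (simp add: S_def q_def algebra_simps)
      then show "w \<in> {(-\<alpha> + sqrt (discrim \<beta> \<alpha> \<gamma>)) / (2 * \<beta>), (-\<alpha> - sqrt (discrim \<beta> \<alpha> \<gamma>)) / (2 * \<beta>)}"
        using discriminant_iff[of \<beta> w \<alpha> \<gamma>] \<beta> by auto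
    qed
  qed simp
  have contq: "continuous_on UNIV q" unfolding q_def by (intro continuous_intros)
  have dq: "(q has_real_derivative (\<alpha> + 2 * \<beta> * w)) (at w)" for w
    unfolding q_def by (auto intro!: derivative_eq_intros)
  have "(\<integral>w. w * (G0 \<circ> q) w \<partial>std_normal) = (\<integral>w. - (\<alpha> + 2 * \<beta> * w) * FF (q w) \<partial>std_normal)"
  proof (rule stein1[where S=S and B=1 and cA="\<bar>\<alpha>\<bar>" and cB="2 * \<beta>"])
    show "finite S" by (rule finS)
    show "continuous_on UNIV (G0 \<circ> q)"
      unfolding G0_def o_def q_def by (intro continuous_intros)
    show "\<bar>(G0 \<circ> q) w\<bar> \<le> 1" for w using G0_bnd[of "q w"] by auto
    show "(\<lambda>w. - (\<alpha> + 2 * \<beta> * w) * FF (q w)) \<in> borel_measurable borel"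
      unfolding q_def by measurable
    show "\<bar>- (\<alpha> + 2 * \<beta> * w) * FF (q w)\<bar> \<le> \<bar>\<alpha>\<bar> + 2 * \<beta> * \<bar>w\<bar>" for w
    proof -
      have "\<bar>- (\<alpha> + 2 * \<beta> * w) * FF (q w)\<bar> = \<bar>\<alpha> + 2 * \<beta> * w\<bar> * FF (q w)"
        using FF_bnd[of "q w"] by (simp only: abs_mult abs_minus_cancel abs_of_nonneg)
      also have "\<dots> \<le> \<bar>\<alpha> + 2 * \<beta> * w\<bar> * 1" using FF_bnd[of "q w"] by (intro mult_left_mono) auto
      also have "\<dots> \<le> \<bar>\<alpha>\<bar> + 2 * \<beta> * \<bar>w\<bar>" 
      proof -
        have "\<bar>\<alpha> + 2 * \<beta> * w\<bar> \<le> \<bar>\<alpha>\<bar> + \<bar>2 * \<beta> * w\<bar>" by (rule abs_triangle_ineq)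
        moreover have "\<bar>2 * \<beta> * w\<bar> = 2 * \<beta> * \<bar>w\<bar>" using \<beta> by (simp add: abs_mult)
        ultimately show ?thesis by simp
      qed
      finally show ?thesis .
    qed
    fix w assume "w \<notin> S"
    then have "q w \<noteq> 0" by (simp add: S_def)
    show "((G0 \<circ> q) has_real_derivative - (\<alpha> + 2 * \<beta> * w) * FF (q w)) (at w)"
    proof (cases "q w > 0")
      case True
      have d1: "((\<lambda>w. exp (- q w)) has_real_derivative - (\<alpha> + 2 * \<beta> * w) * FF (q w)) (at w)"
        using True by (auto intro!: derivative_eq_intros dq simp: FF_def)
      show ?thesis
      proof (rule has_field_derivative_transform_within_open[OF d1])
        show "open {w. q w > 0}" using contq by (simp add: open_Collect_less continuous_on_const)
        show "w \<in> {w. q w > 0}" using True by simp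
        fix x assume "x \<in> {w. q w > 0}"
        then show "exp (- q x) = (G0 \<circ> q) x" by (simp add: G0_def)
      qed
    next
      case False
      then have neg: "q w < 0" using \<open>q w \<noteq> 0\<close> by simp
      have d1: "((\<lambda>w. 1) has_real_derivative - (\<alpha> + 2 * \<beta> * w) * FF (q w)) (at w)"
        using neg by (simp add: FF_def)
      show ?thesis
      proof (rule has_field_derivative_transform_within_open[OF d1])
        show "open {w. q w < 0}" using contq by (simp add: open_Collect_less continuous_on_const)
        show "w \<in> {w. q w < 0}" using neg by simp
        fix x assume "x \<in> {w. q w < 0}"
        then show "1 = (G0 \<circ> q) x" by (simp add: G0_def)
      qed
    qed
  qed
  then show ?thesis by (simp add: q_def o_def)
qed



lemma prob_gauss: "prob_space (gauss d)"
  unfolding gauss_def by (intro prob_space_PiM prob_std_normal)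

lemma space_gauss: "space (gauss d) = (\<Pi>\<^sub>E i\<in>{..<d}. UNIV)"
  unfolding gauss_def by (simp add: space_PiM)

lemma comp_meas: "j < d \<Longrightarrow> (\<lambda>z. z j) \<in> borel_measurable (gauss d)"
  unfolding gauss_def
  using measurable_component_singleton[of j "{..<d}" "\<lambda>_. std_normal"]
  unfolding measurable_cong_sets[OF refl sets_std_normal] by simp

lemma innerd_m1[measurable]: "(\<lambda>z. innerd d a z) \<in> borel_measurable (gauss d)"
  unfolding innerd_def by (intro borel_measurable_sum borel_measurable_times borel_measurable_const comp_meas) auto

lemma innerd_m2[measurable]: "(\<lambda>z. innerd d z z) \<in> borel_measurable (gauss d)"
  unfolding innerd_def by (intro borel_measurable_sum borel_measurable_times comp_meas) auto

lemma coord_meas_distr: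
  assumes "i < d"
  shows "distr (gauss d) std_normal (\<lambda>z. z i) = std_normal"
  unfolding gauss_def using assms
  by (intro distr_PiM_component prob_std_normal) auto

lemma coord_integral:
  fixes f :: "real \<Rightarrow> real"
  assumes "i < d" and [measurable]: "f \<in> borel_measurable borel"
  shows "(\<integral>z. f (z i) \<partial>gauss d) = (\<integral>w. f w \<partial>std_normal)"
    and "integrable (gauss d) (\<lambda>z. f (z i)) \<longleftrightarrow> integrable std_normal f"
proof -
  have m: "(\<lambda>z. z i) \<in> measurable (gauss d) std_normal"
    unfolding gauss_def using assms(1) by (intro measurable_component_singleton) auto
  have fm: "f \<in> borel_measurable std_normal" unfolding measurable_cong_sets[OF sets_std_normal refl] by simp
  show "(\<integral>z. f (z i) \<partial>gauss d) = (\<integral>w. f w \<partial>std_normal)"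
    using integral_distr[OF m fm] coord_meas_distr[OF assms(1)] by simp
  show "integrable (gauss d) (\<lambda>z. f (z i)) \<longleftrightarrow> integrable std_normal f"
    using integrable_distr_eq[OF m fm] coord_meas_distr[OF assms(1)] by simp
qed

lemma std_normal_abs_integrable: "integrable std_normal (\<lambda>w. \<bar>w\<bar>)"
  using integrable_std_normal_moment_abs[of 1]
  by (subst std_normal_integrable) auto

lemma coord_abs_integrable: "i < d \<Longrightarrow> integrable (gauss d) (\<lambda>z. \<bar>z i\<bar>)"
  using coord_integral(2)[of i d "\<lambda>w. \<bar>w\<bar>"] std_normal_abs_integrable by simp

lemma coord_integrable: "i < d \<Longrightarrow> integrable (gauss d) (\<lambda>z. z i)"
  using coord_abs_integrable[of i d] comp_meas[of i d]
  by (subst integrable_abs_iff[symmetric]) auto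

lemma split_coord:
  fixes f :: "(nat \<Rightarrow> real) \<Rightarrow> real"
  assumes i: "i < d" and f: "integrable (gauss d) f"
  shows "integral\<^sup>L (gauss d) f =
    (\<integral>X. (\<integral>x. f (X(i := x)) \<partial>std_normal) \<partial>(PiM ({..<d} - {i}) (\<lambda>_. std_normal)))"
proof -
  define I where "I = {..<d} - {i}"
  have ins: "insert i I = {..<d}" using i by (auto simp: I_def)
  interpret P: prob_space "PiM I (\<lambda>_. std_normal)" by (intro prob_space_PiM prob_std_normal)
  interpret N: prob_space std_normal by (rule prob_std_normal)
  interpret pair_sigma_finite std_normal "PiM I (\<lambda>_. std_normal)" ..
  have eq: "gauss d = distr (std_normal \<Otimes>\<^sub>M PiM I (\<lambda>_. std_normal)) (PiM {..<d} (\<lambda>_. std_normal)) (\<lambda>(x, X). X(i := x))"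
    unfolding gauss_def ins[symmetric]
    by (rule distr_pair_PiM_eq_PiM[symmetric]) (auto intro: prob_std_normal)
  have m: "(\<lambda>(x, X). X(i := x)) \<in> measurable (std_normal \<Otimes>\<^sub>M PiM I (\<lambda>_. std_normal)) (PiM {..<d} (\<lambda>_. std_normal))"
  proof -
    have "(\<lambda>p. (snd p)(i := fst p)) \<in> measurable (std_normal \<Otimes>\<^sub>M PiM I (\<lambda>_. std_normal)) (PiM {..<d} (\<lambda>_. std_normal))"
      by (rule measurable_fun_upd[where J=I]) (use ins in auto)
    then show ?thesis by (simp add: case_prod_beta')
  qed
  have fm: "f \<in> borel_measurable (PiM {..<d} (\<lambda>_. std_normal))" using f unfolding gauss_def by auto
  have int2: "integrable (std_normal \<Otimes>\<^sub>M PiM I (\<lambda>_. std_normal)) (\<lambda>p. f ((\<lambda>(x, X). X(i := x)) p))"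
    using f unfolding eq by (subst (asm) integrable_distr_eq[OF m fm]) 
  have "integral\<^sup>L (gauss d) f = (\<integral>p. f ((\<lambda>(x, X). X(i := x)) p) \<partial>(std_normal \<Otimes>\<^sub>M PiM I (\<lambda>_. std_normal)))"
    unfolding eq by (rule integral_distr[OF m fm])
  also have "\<dots> = (\<integral>X. (\<integral>x. f (X(i := x)) \<partial>std_normal) \<partial>(PiM I (\<lambda>_. std_normal)))"
    using integral_snd[of "\<lambda>x X. f (X(i := x))"] int2 by (simp add: case_prod_beta')
  finally show ?thesis unfolding I_def .
qed



definition phi :: "nat \<Rightarrow> real \<Rightarrow> (nat \<Rightarrow> real) \<Rightarrow> (nat \<Rightarrow> real) \<Rightarrow> real" where
  "phi d h a z = h * innerd d a z + h\<^sup>2 * innerd d z z / 2"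

lemma phi_m[measurable]: "(\<lambda>z. phi d h a z) \<in> borel_measurable (gauss d)"
  unfolding phi_def by measurable

lemma innerd_upd:
  assumes "i < d"
  shows "innerd d a (X(i := x)) = a i * x + (\<Sum>j\<in>{..<d} - {i}. a j * X j)"
proof -
  have "innerd d a (X(i := x)) = a i * (X(i := x)) i + (\<Sum>j\<in>{..<d} - {i}. a j * (X(i := x)) j)"
    unfolding innerd_def using assms by (subst sum.remove[of _ i]) auto
  also have "(X(i := x)) i = x" by simp
  also have "(\<Sum>j\<in>{..<d} - {i}. a j * (X(i := x)) j) = (\<Sum>j\<in>{..<d} - {i}. a j * X j)"
    by (intro sum.cong) auto
  finally show ?thesis .
qed

lemma innerd_upd2:
  assumes "i < d"
  shows "innerd d (X(i := x)) (X(i := x)) = x\<^sup>2 + (\<Sum>j\<in>{..<d} - {i}. X j * X j)"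
proof -
  have "innerd d (X(i := x)) (X(i := x)) = (X(i := x)) i * (X(i := x)) i + (\<Sum>j\<in>{..<d} - {i}. (X(i := x)) j * (X(i := x)) j)"
    unfolding innerd_def using assms by (subst sum.remove[of _ i]) auto
  also have "(X(i := x)) i = x" by simp
  also have "(\<Sum>j\<in>{..<d} - {i}. (X(i := x)) j * (X(i := x)) j) = (\<Sum>j\<in>{..<d} - {i}. X j * X j)"
    by (intro sum.cong) auto
  finally show ?thesis by (simp only: power2_eq_square)
qed

lemma phi_upd:
  assumes "i < d"
  shows "phi d h a (X(i := x)) = (h * a i) * x + (h\<^sup>2 / 2) * x\<^sup>2
     + (h * (\<Sum>j\<in>{..<d} - {i}. a j * X j) + h\<^sup>2 * (\<Sum>j\<in>{..<d} - {i}. X j * X j) / 2)"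
  unfolding phi_def innerd_upd[OF assms] innerd_upd2[OF assms] by (simp add: algebra_simps power2_eq_square)

lemma integrable_coord_bound:
  fixes g :: "(nat \<Rightarrow> real) \<Rightarrow> real"
  assumes "i < d" and [measurable]: "g \<in> borel_measurable (gauss d)"
    and "\<And>z. \<bar>g z\<bar> \<le> c + e * \<bar>z i\<bar>"
  shows "integrable (gauss d) g"
proof (rule Bochner_Integration.integrable_bound[where f="\<lambda>z. c + e * \<bar>z i\<bar>"])
  interpret prob_space "gauss d" by (rule prob_gauss)
  show "integrable (gauss d) (\<lambda>z. c + e * \<bar>z i\<bar>)"
    using coord_abs_integrable[OF assms(1)] by auto
  show "AE x in gauss d. norm (g x) \<le> norm (c + e * \<bar>x i\<bar>)"
    using assms(3) by (auto intro!: AE_I2 order_trans[OF _ abs_ge_self])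
qed measurable

lemma stein_coord:
  assumes i: "i < d" and h: "h > 0"
  shows "(\<integral>z. z i * G0 (phi d h a z) \<partial>gauss d) = (\<integral>z. - (h * a i + h\<^sup>2 * z i) * FF (phi d h a z) \<partial>gauss d)"
proof -
  note [measurable] = comp_meas[OF i]
  have int1: "integrable (gauss d) (\<lambda>z. z i * G0 (phi d h a z))"
  proof (rule integrable_coord_bound[OF i, where c=0 and e=1])
    fix z show "\<bar>z i * G0 (phi d h a z)\<bar> \<le> 0 + 1 * \<bar>z i\<bar>"
      using G0_bnd[of "phi d h a z"] by (simp add: abs_mult mult_left_le)
  qed measurable
  have int2: "integrable (gauss d) (\<lambda>z. - (h * a i + h\<^sup>2 * z i) * FF (phi d h a z))"
  proof (rule integrable_coord_bound[OF i, where c="h * \<bar>a i\<bar>" and e="h\<^sup>2"])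
    fix z
    have "\<bar>- (h * a i + h\<^sup>2 * z i) * FF (phi d h a z)\<bar> = \<bar>h * a i + h\<^sup>2 * z i\<bar> * FF (phi d h a z)"
      using FF_bnd[of "phi d h a z"] by (simp only: abs_mult abs_minus_cancel abs_of_nonneg)
    also have "\<dots> \<le> \<bar>h * a i + h\<^sup>2 * z i\<bar>"
      using FF_bnd[of "phi d h a z"] by (simp add: mult_left_le)
    also have "\<dots> \<le> \<bar>h * a i\<bar> + \<bar>h\<^sup>2 * z i\<bar>" by (rule abs_triangle_ineq)
    also have "\<dots> = h * \<bar>a i\<bar> + h\<^sup>2 * \<bar>z i\<bar>" using h by (simp add: abs_mult)
    finally show "\<bar>- (h * a i + h\<^sup>2 * z i) * FF (phi d h a z)\<bar> \<le> h * \<bar>a i\<bar> + h\<^sup>2 * \<bar>z i\<bar>" .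
  qed measurable
  define \<gamma> where "\<gamma> X = h * (\<Sum>j\<in>{..<d} - {i}. a j * X j) + h\<^sup>2 * (\<Sum>j\<in>{..<d} - {i}. X j * X j) / 2" for X :: "nat \<Rightarrow> real"
  have pu: "phi d h a (X(i := x)) = (h * a i) * x + (h\<^sup>2 / 2) * x\<^sup>2 + \<gamma> X" for X x
    unfolding \<gamma>_def by (rule phi_upd[OF i])
  have "(\<integral>z. z i * G0 (phi d h a z) \<partial>gauss d)
     = (\<integral>X. (\<integral>x. x * G0 ((h * a i) * x + (h\<^sup>2 / 2) * x\<^sup>2 + \<gamma> X) \<partial>std_normal) \<partial>(PiM ({..<d} - {i}) (\<lambda>_. std_normal)))"
    by (subst split_coord[OF i int1]) (simp add: pu)
  also have "\<dots> = (\<integral>X. (\<integral>x. - ((h * a i) + 2 * (h\<^sup>2 / 2) * x) * FF ((h * a i) * x + (h\<^sup>2 / 2) * x\<^sup>2 + \<gamma> X) \<partial>std_normal) \<partial>(PiM ({..<d} - {i}) (\<lambda>_. std_normal)))"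
    using h by (intro Bochner_Integration.integral_cong refl stein_quad) auto
  also have "\<dots> = (\<integral>z. - (h * a i + h\<^sup>2 * z i) * FF (phi d h a z) \<partial>gauss d)"
    by (subst split_coord[OF i int2]) (simp add: pu)
  finally show ?thesis .
qed

lemma stein_sum:
  assumes h: "h > 0"
  shows "(\<integral>z. innerd d b z * G0 (phi d h a z) \<partial>gauss d)
     = - (h * innerd d a b) * (\<integral>z. FF (phi d h a z) \<partial>gauss d) - h\<^sup>2 * (\<integral>z. innerd d b z * FF (phi d h a z) \<partial>gauss d)"
proof -
  interpret prob_space "gauss d" by (rule prob_gauss)
  have intA: "integrable (gauss d) (\<lambda>z. b i * (z i * G0 (phi d h a z)))" if "i < d" for i
  proof -
    note [measurable] = comp_meas[OF that]
    show ?thesis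
    proof (rule integrable_coord_bound[OF that, where c=0 and e="\<bar>b i\<bar>"])
      fix z show "\<bar>b i * (z i * G0 (phi d h a z))\<bar> \<le> 0 + \<bar>b i\<bar> * \<bar>z i\<bar>"
        using G0_bnd[of "phi d h a z"] by (simp add: abs_mult mult_left_le mult_left_mono)
    qed measurable
  qed
  have intB: "integrable (gauss d) (\<lambda>z. b i * (- (h * a i + h\<^sup>2 * z i) * FF (phi d h a z)))" if "i < d" for i
  proof -
    note [measurable] = comp_meas[OF that]
    show ?thesis
    proof (rule integrable_coord_bound[OF that, where c="\<bar>b i\<bar> * (h * \<bar>a i\<bar>)" and e="\<bar>b i\<bar> * h\<^sup>2"])
      fix z
      have "\<bar>- (h * a i + h\<^sup>2 * z i) * FF (phi d h a z)\<bar> = \<bar>h * a i + h\<^sup>2 * z i\<bar> * FF (phi d h a z)"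
        using FF_bnd[of "phi d h a z"] by (simp only: abs_mult abs_minus_cancel abs_of_nonneg)
      also have "\<dots> \<le> \<bar>h * a i + h\<^sup>2 * z i\<bar>"
        using FF_bnd[of "phi d h a z"] by (simp add: mult_left_le)
      also have "\<dots> \<le> \<bar>h * a i\<bar> + \<bar>h\<^sup>2 * z i\<bar>" by (rule abs_triangle_ineq)
      also have "\<dots> = h * \<bar>a i\<bar> + h\<^sup>2 * \<bar>z i\<bar>" using h by (simp add: abs_mult)
      finally have "\<bar>- (h * a i + h\<^sup>2 * z i) * FF (phi d h a z)\<bar> \<le> h * \<bar>a i\<bar> + h\<^sup>2 * \<bar>z i\<bar>" .
      then have "\<bar>b i\<bar> * \<bar>- (h * a i + h\<^sup>2 * z i) * FF (phi d h a z)\<bar> \<le> \<bar>b i\<bar> * (h * \<bar>a i\<bar> + h\<^sup>2 * \<bar>z i\<bar>)"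
        by (intro mult_left_mono) auto
      moreover have "\<bar>b i * (- (h * a i + h\<^sup>2 * z i) * FF (phi d h a z))\<bar> = \<bar>b i\<bar> * \<bar>- (h * a i + h\<^sup>2 * z i) * FF (phi d h a z)\<bar>"
        by (rule abs_mult)
      moreover have "\<bar>b i\<bar> * (h * \<bar>a i\<bar> + h\<^sup>2 * \<bar>z i\<bar>) = \<bar>b i\<bar> * (h * \<bar>a i\<bar>) + \<bar>b i\<bar> * h\<^sup>2 * \<bar>z i\<bar>"
        by (simp add: algebra_simps)
      ultimately show "\<bar>b i * (- (h * a i + h\<^sup>2 * z i) * FF (phi d h a z))\<bar> \<le> \<bar>b i\<bar> * (h * \<bar>a i\<bar>) + \<bar>b i\<bar> * h\<^sup>2 * \<bar>z i\<bar>"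
        by linarith
    qed measurable
  qed
  have "(\<integral>z. innerd d b z * G0 (phi d h a z) \<partial>gauss d) = (\<integral>z. (\<Sum>i<d. b i * (z i * G0 (phi d h a z))) \<partial>gauss d)"
    unfolding innerd_def by (intro Bochner_Integration.integral_cong refl) (simp add: sum_distrib_right sum_distrib_left mult_ac)
  also have "\<dots> = (\<Sum>i<d. (\<integral>z. b i * (z i * G0 (phi d h a z)) \<partial>gauss d))"
    using intA by (intro Bochner_Integration.integral_sum) auto
  also have "\<dots> = (\<Sum>i<d. (\<integral>z. b i * (- (h * a i + h\<^sup>2 * z i) * FF (phi d h a z)) \<partial>gauss d))"
    using stein_coord[OF _ h] by (intro sum.cong refl) simp
  also have "\<dots> = (\<integral>z. (\<Sum>i<d. b i * (- (h * a i + h\<^sup>2 * z i) * FF (phi d h a z))) \<partial>gauss d)"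
    using intB by (intro Bochner_Integration.integral_sum[symmetric]) auto
  also have "\<dots> = (\<integral>z. - (h * innerd d a b) * FF (phi d h a z) - h\<^sup>2 * (innerd d b z * FF (phi d h a z)) \<partial>gauss d)"
  proof (intro Bochner_Integration.integral_cong refl)
    fix z
    let ?F = "FF (phi d h a z)"
    have "(\<Sum>i<d. b i * (- (h * a i + h\<^sup>2 * z i) * ?F)) = (\<Sum>i<d. (- (h * ?F)) * (a i * b i) - (h\<^sup>2 * ?F) * (b i * z i))"
      by (intro sum.cong refl) (simp add: algebra_simps)
    also have "\<dots> = (- (h * ?F)) * (\<Sum>i<d. a i * b i) - (h\<^sup>2 * ?F) * (\<Sum>i<d. b i * z i)"
      by (simp add: sum_subtractf sum_distrib_left)
    finally show "(\<Sum>i<d. b i * (- (h * a i + h\<^sup>2 * z i) * ?F)) = - (h * innerd d a b) * ?F - h\<^sup>2 * (innerd d b z * ?F)"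
      unfolding innerd_def by (simp add: algebra_simps)
  qed
  also have "\<dots> = - (h * innerd d a b) * (\<integral>z. FF (phi d h a z) \<partial>gauss d) - h\<^sup>2 * (\<integral>z. innerd d b z * FF (phi d h a z) \<partial>gauss d)"
  proof -
    have i1: "integrable (gauss d) (\<lambda>z. FF (phi d h a z))"
      by (rule integrable_const_bound[where B=1]) (use FF_bnd in auto)
    have i2: "integrable (gauss d) (\<lambda>z. innerd d b z * FF (phi d h a z))"
    proof -
      have "integrable (gauss d) (\<lambda>z. (\<Sum>i<d. b i * (z i * FF (phi d h a z))))"
      proof (intro Bochner_Integration.integrable_sum)
        fix i assume "i \<in> {..<d}"
        then have i: "i < d" by simp
        note [measurable] = comp_meas[OF i]
        show "integrable (gauss d) (\<lambda>z. b i * (z i * FF (phi d h a z)))"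
        proof (rule integrable_coord_bound[OF i, where c=0 and e="\<bar>b i\<bar>"])
          fix z show "\<bar>b i * (z i * FF (phi d h a z))\<bar> \<le> 0 + \<bar>b i\<bar> * \<bar>z i\<bar>"
            using FF_bnd[of "phi d h a z"] by (simp add: abs_mult mult_left_le mult_left_mono)
        qed measurable
      qed
      moreover have "(\<lambda>z. (\<Sum>i<d. b i * (z i * FF (phi d h a z)))) = (\<lambda>z. innerd d b z * FF (phi d h a z))"
        unfolding innerd_def by (simp add: sum_distrib_right sum_distrib_left mult_ac)
      ultimately show ?thesis by simp
    qed
    show ?thesis using i1 i2 by simp
  qed
  finally show ?thesis .
qed



lemma coord_indep:
  assumes "0 < d"
  shows "prob_space.indep_vars (gauss d) (\<lambda>_. borel) (\<lambda>i z. z i) {..<d}"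
proof -
  interpret prob_space "gauss d" by (rule prob_gauss)
  have ne: "{..<d} \<noteq> {}" using assms by auto
  have rv: "random_variable borel (\<lambda>z. z i)" if "i \<in> {..<d}" for i
    using comp_meas[of i d] that by simp
  have d1: "distr (gauss d) borel (\<lambda>z. z i) = std_normal" if "i \<in> {..<d}" for i
  proof -
    have "distr (gauss d) borel (\<lambda>z. z i) = distr (gauss d) std_normal (\<lambda>z. z i)"
      by (rule distr_cong) auto
    also have "\<dots> = std_normal" using coord_meas_distr[of i d] that by simp
    finally show ?thesis .
  qed
  have "distr (gauss d) (\<Pi>\<^sub>M i\<in>{..<d}. borel) (\<lambda>x. \<lambda>i\<in>{..<d}. x i) = (\<Pi>\<^sub>M i\<in>{..<d}. distr (gauss d) borel (\<lambda>z. z i))"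
  proof -
    have "(\<Pi>\<^sub>M i\<in>{..<d}. distr (gauss d) borel (\<lambda>z. z i)) = gauss d"
      unfolding gauss_def by (rule PiM_cong) (auto simp: d1[unfolded gauss_def])
    moreover have "distr (gauss d) (\<Pi>\<^sub>M i\<in>{..<d}. borel) (\<lambda>x. \<lambda>i\<in>{..<d}. x i) = distr (gauss d) (gauss d) (\<lambda>x. x)"
      by (rule distr_cong) (auto simp: gauss_def space_PiM intro!: sets_PiM_cong)
    ultimately show ?thesis by simp
  qed
  then show ?thesis using indep_vars_iff_distr_eq_PiM'[OF ne rv] by simp
qed

lemma coord_distributed:
  assumes "i < d"
  shows "distributed (gauss d) lborel (\<lambda>z. z i) (\<lambda>x. ennreal (std_normal_density x))"
  unfolding distributed_def
proof (intro conjI)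
  have "distr (gauss d) lborel (\<lambda>z. z i) = distr (gauss d) std_normal (\<lambda>z. z i)"
    by (rule distr_cong) auto
  also have "\<dots> = std_normal" using coord_meas_distr[OF assms] by simp
  finally show "distr (gauss d) lborel (\<lambda>z. z i) = density lborel (\<lambda>x. ennreal (std_normal_density x))"
    unfolding std_normal_def .
  show "(\<lambda>x. ennreal (std_normal_density x)) \<in> borel_measurable lborel" by simp
  show "(\<lambda>z. z i) \<in> gauss d \<rightarrow>\<^sub>M lborel" using comp_meas[OF assms] by simp
qed

lemma innerd_distributed:
  assumes s: "innerd d a a > 0"
  shows "distributed (gauss d) lborel (\<lambda>z. innerd d a z / sqrt (innerd d a a)) (\<lambda>x. ennreal (std_normal_density x))"
proof -
  interpret prob_space "gauss d" by (rule prob_gauss)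
  define J where "J = {i. i < d \<and> a i \<noteq> 0}"
  have finJ: "finite J" unfolding J_def by auto
  have sJ: "innerd d a a = (\<Sum>i\<in>J. (a i)\<^sup>2)"
    unfolding innerd_def J_def power2_eq_square by (rule sum.mono_neutral_right) auto
  have J0: "J \<noteq> {}" using s sJ by auto
  have d0: "0 < d" using J0 unfolding J_def by auto
  have ind: "indep_vars (\<lambda>_. borel) (\<lambda>i z. a i * z i) J"
  proof -
    have "indep_vars (\<lambda>_. borel) (\<lambda>i z. z i) J"
      using coord_indep[OF d0] by (rule indep_vars_subset) (auto simp: J_def)
    then show ?thesis by (rule indep_vars_compose2) auto
  qed
  have dis: "distributed (gauss d) lborel (\<lambda>z. a i * z i) (normal_density 0 (\<bar>a i\<bar>))" if "i \<in> J" for i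
  proof -
    have "distributed (gauss d) lborel (\<lambda>z. 0 + a i * z i) (normal_density (0 + a i * 0) (\<bar>a i\<bar> * 1))"
      using that coord_distributed[of i d] by (intro normal_density_affine) (auto simp: J_def)
    then show ?thesis by simp
  qed
  have "distributed (gauss d) lborel (\<lambda>z. \<Sum>i\<in>J. a i * z i) (normal_density (\<Sum>i\<in>J. 0) (sqrt (\<Sum>i\<in>J. \<bar>a i\<bar>\<^sup>2)))"
    using finJ J0 ind dis by (intro sum_indep_normal) (auto simp: J_def)
  moreover have "(\<lambda>z. \<Sum>i\<in>J. a i * z i) = (\<lambda>z. innerd d a z)"
    unfolding innerd_def J_def by (intro ext sum.mono_neutral_left) auto
  ultimately have "distributed (gauss d) lborel (\<lambda>z. innerd d a z) (normal_density 0 (sqrt (innerd d a a)))"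
    using sJ by simp
  then show ?thesis
    using normal_standard_normal_convert[of "sqrt (innerd d a a)" "\<lambda>z. innerd d a z" 0] s by simp
qed

lemma innerd_integral:
  fixes g :: "real \<Rightarrow> real"
  assumes s: "innerd d a a > 0" and [measurable]: "g \<in> borel_measurable borel"
  shows "(\<integral>z. g (innerd d a z) \<partial>gauss d) = (\<integral>w. g (sqrt (innerd d a a) * w) \<partial>std_normal)"
    and "integrable (gauss d) (\<lambda>z. g (innerd d a z)) \<longleftrightarrow> integrable std_normal (\<lambda>w. g (sqrt (innerd d a a) * w))"
proof -
  let ?c = "sqrt (innerd d a a)"
  have c: "?c > 0" using s by simp
  have D: "distributed (gauss d) lborel (\<lambda>z. innerd d a z / ?c) (\<lambda>x. ennreal (std_normal_density x))"
    by (rule innerd_distributed[OF s])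
  have gm: "(\<lambda>w. g (?c * w)) \<in> borel_measurable lborel" by simp
  have "(\<integral>w. g (?c * w) \<partial>std_normal) = (\<integral>w. std_normal_density w * g (?c * w) \<partial>lborel)"
    by (rule std_normal_integral) simp
  also have "\<dots> = (\<integral>z. g (?c * (innerd d a z / ?c)) \<partial>gauss d)"
    by (rule distributed_integral[OF D gm]) simp
  also have "\<dots> = (\<integral>z. g (innerd d a z) \<partial>gauss d)" using c by simp
  finally show "(\<integral>z. g (innerd d a z) \<partial>gauss d) = (\<integral>w. g (?c * w) \<partial>std_normal)" by simp
  have "integrable std_normal (\<lambda>w. g (?c * w)) \<longleftrightarrow> integrable lborel (\<lambda>w. std_normal_density w * g (?c * w))"
    by (rule std_normal_integrable) simp
  also have "\<dots> \<longleftrightarrow> integrable (gauss d) (\<lambda>z. g (?c * (innerd d a z / ?c)))"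
    by (rule distributed_integrable[OF D gm]) simp
  also have "\<dots> \<longleftrightarrow> integrable (gauss d) (\<lambda>z. g (innerd d a z))" using c by simp
  finally show "integrable (gauss d) (\<lambda>z. g (innerd d a z)) \<longleftrightarrow> integrable std_normal (\<lambda>w. g (?c * w))" by simp
qed



lemma std_moment2: "(\<integral>w. w\<^sup>2 \<partial>std_normal) = 1" "integrable std_normal (\<lambda>w. w\<^sup>2)"
proof -
  have "(\<integral>w. std_normal_density w * w ^ (2 * 1) \<partial>lborel) = fact (2 * 1) / (2 ^ 1 * fact 1)"
    by (rule integral_std_normal_moment_even)
  then show "(\<integral>w. w\<^sup>2 \<partial>std_normal) = 1" by (subst std_normal_integral) auto
  show "integrable std_normal (\<lambda>w. w\<^sup>2)"
    using integrable_std_normal_moment[of 2] by (subst std_normal_integrable) auto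
qed

lemma std_moment4: "(\<integral>w. w ^ 4 \<partial>std_normal) = 3" "integrable std_normal (\<lambda>w. w ^ 4)"
proof -
  have "(\<integral>w. std_normal_density w * w ^ (2 * 2) \<partial>lborel) = fact (2 * 2) / (2 ^ 2 * fact 2)"
    by (rule integral_std_normal_moment_even)
  then show "(\<integral>w. w ^ 4 \<partial>std_normal) = 3" by (subst std_normal_integral) (auto simp: fact_numeral)
  show "integrable std_normal (\<lambda>w. w ^ 4)"
    using integrable_std_normal_moment[of 4] by (subst std_normal_integrable) auto
qed

lemma chi_var:
  "integrable (gauss d) (\<lambda>z. (innerd d z z - real d)\<^sup>2)"
  "(\<integral>z. (innerd d z z - real d)\<^sup>2 \<partial>gauss d) = 2 * real d"
proof -
  interpret prob_space "gauss d" by (rule prob_gauss)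
  define Y where "Y i z = (z i)\<^sup>2 - 1" for i :: nat and z :: "nat \<Rightarrow> real"
  have Ym[measurable]: "Y i \<in> borel_measurable (gauss d)" if "i < d" for i
    using comp_meas[OF that] unfolding Y_def by measurable
  have S: "innerd d z z - real d = (\<Sum>i<d. Y i z)" for z
    unfolding innerd_def Y_def by (simp add: sum_subtractf power2_eq_square)
  have Yint: "integrable (gauss d) (Y i)" "(\<integral>z. Y i z \<partial>gauss d) = 0" if "i < d" for i
  proof -
    have i2: "integrable (gauss d) (\<lambda>z. (z i)\<^sup>2)" using coord_integral(2)[OF that, of "\<lambda>w. w\<^sup>2"] std_moment2 by simp
    show "integrable (gauss d) (Y i)" unfolding Y_def using i2 by auto
    have "(\<integral>z. (z i)\<^sup>2 \<partial>gauss d) = 1" using coord_integral(1)[OF that, of "\<lambda>w. w\<^sup>2"] std_moment2 by simp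
    then show "(\<integral>z. Y i z \<partial>gauss d) = 0" unfolding Y_def using i2 by (simp add: prob_space)
  qed
  have YY: "integrable (gauss d) (\<lambda>z. Y i z * Y j z) \<and> (\<integral>z. Y i z * Y j z \<partial>gauss d) = (if i = j then 2 else 0)"
    if "i < d" "j < d" for i j
  proof (cases "i = j")
    case True
    have e: "Y i z * Y j z = (z i)^4 - 2 * (z i)\<^sup>2 + 1" for z
      unfolding Y_def True by (simp add: power2_eq_square power4_eq_xxxx algebra_simps)
    have i4: "integrable (gauss d) (\<lambda>z. (z i)^4)" using coord_integral(2)[OF that(1), of "\<lambda>w. w^4"] std_moment4 by simp
    have i2: "integrable (gauss d) (\<lambda>z. (z i)\<^sup>2)" using coord_integral(2)[OF that(1), of "\<lambda>w. w\<^sup>2"] std_moment2 by simp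
    have v4: "(\<integral>z. (z i)^4 \<partial>gauss d) = 3" using coord_integral(1)[OF that(1), of "\<lambda>w. w^4"] std_moment4 by simp
    have v2: "(\<integral>z. (z i)\<^sup>2 \<partial>gauss d) = 1" using coord_integral(1)[OF that(1), of "\<lambda>w. w\<^sup>2"] std_moment2 by simp
    show ?thesis unfolding e using i4 i2 v4 v2 True by (simp add: prob_space)
  next
    case False
    have d0: "0 < d" using that by auto
    have ind: "indep_vars (\<lambda>_. borel) Y {i, j}"
    proof -
      have "indep_vars (\<lambda>_. borel) (\<lambda>i z. z i) {i, j}"
        using coord_indep[OF d0] by (rule indep_vars_subset) (use that in auto)
      then have "indep_vars (\<lambda>_. borel) (\<lambda>k z. (z k)\<^sup>2 - 1) {i, j}" by (rule indep_vars_compose2) auto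
      then show ?thesis unfolding Y_def .
    qed
    have "(\<integral>z. (\<Prod>k\<in>{i, j}. Y k z) \<partial>gauss d) = (\<Prod>k\<in>{i, j}. \<integral>z. Y k z \<partial>gauss d)"
      using ind Yint that by (intro indep_vars_lebesgue_integral) auto
    moreover have "integrable (gauss d) (\<lambda>z. (\<Prod>k\<in>{i, j}. Y k z))"
      using ind Yint that by (intro indep_vars_integrable) auto
    ultimately show ?thesis using False Yint that by simp
  qed
  have sq: "(innerd d z z - real d)\<^sup>2 = (\<Sum>i<d. \<Sum>j<d. Y i z * Y j z)" for z
    unfolding S power2_eq_square sum_product ..
  show "integrable (gauss d) (\<lambda>z. (innerd d z z - real d)\<^sup>2)"
    unfolding sq using YY by (intro Bochner_Integration.integrable_sum) auto
  have "(\<integral>z. (innerd d z z - real d)\<^sup>2 \<partial>gauss d) = (\<Sum>i<d. \<Sum>j<d. \<integral>z. Y i z * Y j z \<partial>gauss d)"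
    unfolding sq using YY
    by (subst Bochner_Integration.integral_sum) (auto intro!: sum.cong Bochner_Integration.integral_sum Bochner_Integration.integrable_sum)
  also have "\<dots> = (\<Sum>i<d. \<Sum>j<d. (if i = j then 2 else 0))"
    using YY by (intro sum.cong refl) auto
  also have "\<dots> = 2 * real d" by simp
  finally show "(\<integral>z. (innerd d z z - real d)\<^sup>2 \<partial>gauss d) = 2 * real d" .
qed



lemma Phi_integral: "Phi t = (\<integral>u. std_normal_density u * indicator {..t} u \<partial>lborel)"
proof -
  have "Phi t = (\<integral>u. indicator {..t} u \<partial>std_normal)"
    unfolding Phi_def by simp
  also have "\<dots> = (\<integral>u. std_normal_density u * indicator {..t} u \<partial>lborel)"
    by (rule std_normal_integral) simp
  finally show ?thesis .
qed

lemma psi_shift: "std_normal_density w * exp (- (c * w + k)) = exp (c\<^sup>2 / 2 - k) * std_normal_density (w + c)"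
proof -
  have "exp (- w\<^sup>2 / 2) * exp (- (c * w + k)) = exp (c\<^sup>2 / 2 - k) * exp (- (w + c)\<^sup>2 / 2)"
    unfolding exp_add[symmetric] by (rule arg_cong[where f=exp]) (simp add: power2_eq_square field_simps)
  then show ?thesis unfolding std_normal_density_def by (simp add: mult_ac)
qed

lemma FF_closed:
  assumes c: "c > 0"
  shows "(\<integral>w. FF (c * w + k) \<partial>std_normal) = exp (c\<^sup>2 / 2 - k) * Phi (k / c - c)"
proof -
  let ?E = "exp (c\<^sup>2 / 2 - k)"
  have "(\<integral>w. FF (c * w + k) \<partial>std_normal) = (\<integral>w. std_normal_density w * FF (c * w + k) \<partial>lborel)"
    by (rule std_normal_integral) simp
  also have "\<dots> = (\<integral>w. ?E * (std_normal_density (w + c) * indicator {w. 0 \<le> c * w + k} w) \<partial>lborel)"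
  proof (intro Bochner_Integration.integral_cong refl)
    fix w
    show "std_normal_density w * FF (c * w + k) = ?E * (std_normal_density (w + c) * indicator {w. 0 \<le> c * w + k} w)"
      using psi_shift[of w c k] by (simp add: FF_def indicator_def mult_ac)
  qed
  also have "\<dots> = \<bar>-1\<bar> *\<^sub>R (\<integral>u. ?E * (std_normal_density ((- c + (-1) * u) + c) * indicator {w. 0 \<le> c * w + k} (- c + (-1) * u)) \<partial>lborel)"
    by (rule lborel_integral_real_affine) simp
  also have "\<dots> = (\<integral>u. ?E * (std_normal_density u * indicator {..k / c - c} u) \<partial>lborel)"
  proof -
    have "(- c + (-1) * u \<in> {w. 0 \<le> c * w + k}) \<longleftrightarrow> u \<in> {..k / c - c}" for u
    proof -
      have "0 \<le> c * (- c + (-1) * u) + k \<longleftrightarrow> c * u \<le> k - c * c" by (simp add: algebra_simps)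
      also have "\<dots> \<longleftrightarrow> u \<le> (k - c * c) / c" using c by (simp add: pos_le_divide_eq mult.commute)
      also have "(k - c * c) / c = k / c - c" using c by (simp add: field_simps)
      finally show ?thesis by simp
    qed
    then have eqf: "?E * (std_normal_density ((- c + (-1) * u) + c) * indicator {w. 0 \<le> c * w + k} (- c + (-1) * u))
        = ?E * (std_normal_density u * indicator {..k / c - c} u)" for u
      by (simp add: indicator_def std_normal_density_def)
    show ?thesis unfolding eqf by simp
  qed
  also have "\<dots> = ?E * Phi (k / c - c)"
    unfolding Phi_integral by simp
  finally show ?thesis .
qed



lemma exp_neg_lip:
  fixes p q :: real
  assumes "0 \<le> p" "0 \<le> q"
  shows "\<bar>exp (- p) - exp (- q)\<bar> \<le> \<bar>p - q\<bar>"
proof -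
  have key: "exp (- p) - exp (- q) \<le> q - p" if "0 \<le> p" "p \<le> q" for p q :: real
  proof -
    have "exp (- p) - exp (- q) = exp (- p) * (1 - exp (- (q - p)))"
      by (simp add: algebra_simps exp_diff exp_minus field_simps)
    also have "\<dots> \<le> 1 * (q - p)"
    proof (rule mult_mono)
      show "exp (- p) \<le> 1" using that by simp
      show "1 - exp (- (q - p)) \<le> q - p" using exp_ge_add_one_self[of "- (q - p)"] by linarith
      show "0 \<le> 1 - exp (- (q - p))" using that by simp
    qed simp
    finally show ?thesis by simp
  qed
  show ?thesis
  proof (cases "p \<le> q")
    case True
    have "exp (- q) \<le> exp (- p)" using True by simp
    then show ?thesis using key[OF assms(1) True] True by simp
  next
    case False
    have "exp (- p) \<le> exp (- q)" using False by simp
    then show ?thesis using key[OF assms(2), of p] False by simp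
  qed
qed

lemma FF_pointwise:
  fixes p p0 \<delta> :: real
  assumes \<delta>: "\<delta> > 0"
  shows "\<bar>FF p - FF p0\<bar> \<le> \<delta> + indicator {t. \<bar>t\<bar> \<le> \<delta>} p0 + (p - p0)\<^sup>2 / \<delta>\<^sup>2"
proof -
  have b01: "\<bar>FF p - FF p0\<bar> \<le> 1" using FF_bnd[of p] FF_bnd[of p0] by linarith
  have nn: "0 \<le> (indicator {t. \<bar>t\<bar> \<le> \<delta>} p0 :: real)" "0 \<le> (p - p0)\<^sup>2 / \<delta>\<^sup>2" by (auto simp: indicator_def)
  show ?thesis
  proof (cases "\<bar>p - p0\<bar> > \<delta>")
    case True
    then have "\<delta>\<^sup>2 < \<bar>p - p0\<bar>\<^sup>2" using \<delta> by (intro power_strict_mono) auto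
    then have "\<delta>\<^sup>2 < (p - p0)\<^sup>2" by simp
    then have "1 < (p - p0)\<^sup>2 / \<delta>\<^sup>2" using \<delta> by simp
    then show ?thesis using b01 nn \<delta> by linarith
  next
    case False
    show ?thesis
    proof (cases "\<bar>p0\<bar> \<le> \<delta>")
      case True
      then have "(indicator {t. \<bar>t\<bar> \<le> \<delta>} p0 :: real) = 1" by (simp add: indicator_def)
      then show ?thesis using b01 nn \<delta> by linarith
    next
      case far: False
      show ?thesis
      proof (cases "p0 > 0")
        case True
        then have "p0 > \<delta>" using far by simp
        then have "p > 0" using False by simp
        then have "\<bar>FF p - FF p0\<bar> \<le> \<bar>p - p0\<bar>"
          using \<open>p0 > 0\<close> exp_neg_lip[of p p0] by (simp add: FF_def)
        then show ?thesis using False nn by linarith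
      next
        case False2: False
        then have "p0 < - \<delta>" using far by simp
        then have "p < 0" using False by simp
        then have "FF p - FF p0 = 0" using \<open>p0 < - \<delta>\<close> \<delta> by (simp add: FF_def)
        then show ?thesis using nn \<delta> by simp
      qed
    qed
  qed
qed

lemma abs_innerd_bound:
  "integrable (gauss d) (\<lambda>z. innerd d b z)"
  "(\<integral>z. \<bar>innerd d b z\<bar> \<partial>gauss d) \<le> sqrt (innerd d b b)"
proof -
  interpret prob_space "gauss d" by (rule prob_gauss)
  show ii: "integrable (gauss d) (\<lambda>z. innerd d b z)"
    unfolding innerd_def
    by (intro Bochner_Integration.integrable_sum integrable_mult_right coord_integrable) auto
  show "(\<integral>z. \<bar>innerd d b z\<bar> \<partial>gauss d) \<le> sqrt (innerd d b b)"
  proof (cases "innerd d b b > 0")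
    case True
    have "(\<integral>z. \<bar>innerd d b z\<bar> \<partial>gauss d) = (\<integral>w. \<bar>sqrt (innerd d b b) * w\<bar> \<partial>std_normal)"
      using innerd_integral(1)[OF True, of abs] by simp
    also have "\<dots> = sqrt (innerd d b b) * (\<integral>w. \<bar>w\<bar> \<partial>std_normal)"
      using True by (simp add: abs_mult)
    also have "(\<integral>w. \<bar>w\<bar> \<partial>std_normal) = sqrt (2 / pi)"
    proof -
      have "(\<integral>w. std_normal_density w * \<bar>w\<bar> ^ (2 * 0 + 1) \<partial>lborel) = sqrt (2 / pi) * 2 ^ 0 * fact 0"
        by (rule integral_std_normal_moment_abs_odd)
      then show ?thesis by (subst std_normal_integral) auto
    qed
    also have "sqrt (innerd d b b) * sqrt (2 / pi) \<le> sqrt (innerd d b b) * 1"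
    proof (rule mult_left_mono)
      have "2 / pi \<le> 1" using pi_gt3 by simp
      then show "sqrt (2 / pi) \<le> 1" by simp
    qed (use True in simp)
    finally show ?thesis by simp
  next
    case False
    have nn: "0 \<le> innerd d b b" unfolding innerd_def by (intro sum_nonneg) auto
    then have z: "innerd d b b = 0" using False by simp
    have "b i = 0" if "i < d" for i
    proof -
      have "(\<Sum>i<d. b i * b i) = 0" using z by (simp add: innerd_def)
      then have "\<forall>i\<in>{..<d}. b i * b i = 0" by (subst (asm) sum_nonneg_eq_0_iff) auto
      then show ?thesis using that by simp
    qed
    then have "innerd d b z = 0" for z unfolding innerd_def by simp
    then show ?thesis using z by simp
  qed
qed



lemma psi_le_half: "std_normal_density w \<le> 1 / 2"
proof -
  have "exp (- w\<^sup>2 / 2) \<le> 1" by simp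
  moreover have "2 \<le> sqrt (2 * pi)"
  proof -
    have "sqrt 4 \<le> sqrt (2 * pi)" using pi_gt3 by (intro real_sqrt_le_mono) simp
    moreover have "sqrt 4 = (2::real)" by (simp add: real_sqrt_eq_iff)
    ultimately show ?thesis by simp
  qed
  then have "1 / sqrt (2 * pi) \<le> 1 / 2" by (intro divide_left_mono) auto
  then have "(1 / sqrt (2 * pi)) * exp (- w\<^sup>2 / 2) \<le> (1 / 2) * 1"
    using \<open>exp (- w\<^sup>2 / 2) \<le> 1\<close> by (intro mult_mono) auto
  then show ?thesis unfolding std_normal_density_def by simp
qed

lemma window_bound:
  assumes c: "c > 0" and \<delta>: "\<delta> > 0"
  shows "(\<integral>w. indicator {t. \<bar>t\<bar> \<le> \<delta>} (c * w + k) \<partial>std_normal) \<le> \<delta> / c"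
proof -
  define A where "A = {(- k - \<delta>) / c .. (- k + \<delta>) / c}"
  have indeq: "indicator {t. \<bar>t\<bar> \<le> \<delta>} (c * w + k) = (indicator A w :: real)" for w
  proof -
    have "\<bar>c * w + k\<bar> \<le> \<delta> \<longleftrightarrow> - k - \<delta> \<le> c * w \<and> c * w \<le> - k + \<delta>" by auto
    also have "\<dots> \<longleftrightarrow> (- k - \<delta>) / c \<le> w \<and> w \<le> (- k + \<delta>) / c"
      using c by (simp add: pos_divide_le_eq pos_le_divide_eq mult.commute)
    finally show ?thesis unfolding A_def by (simp add: indicator_def)
  qed
  have "(\<integral>w. indicator {t. \<bar>t\<bar> \<le> \<delta>} (c * w + k) \<partial>std_normal) = (\<integral>w. std_normal_density w * indicator A w \<partial>lborel)"
    unfolding indeq A_def by (rule std_normal_integral) simp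
  also have "\<dots> \<le> (\<integral>w. 1 / 2 * indicator A w \<partial>lborel)"
  proof (rule integral_mono)
    have iA: "integrable lborel (indicator A :: real \<Rightarrow> real)"
      unfolding A_def by (simp add: integrable_indicator_iff emeasure_lborel_Icc_eq)
    show "integrable lborel (\<lambda>w. 1 / 2 * indicator A w :: real)" using iA by simp
    show "integrable lborel (\<lambda>w. std_normal_density w * indicator A w)"
      by (rule Bochner_Integration.integrable_bound[OF iA]) (auto simp: indicator_def intro!: AE_I2 order_trans[OF psi_le_half] simp: A_def)
    show "std_normal_density w * indicator A w \<le> 1 / 2 * indicator A w" for w
      using psi_le_half[of w] by (simp add: indicator_def)
  qed
  also have "\<dots> = 1 / 2 * measure lborel A" by simp
  also have "measure lborel A = 2 * \<delta> / c"
    unfolding A_def using c \<delta> by (simp add: field_simps)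
  finally show ?thesis by simp
qed

lemma FF_approx:
  assumes d: "d > 0" and l: "l > 0" and x: "x > 0" and aa: "innerd d a a = real d * x" and \<delta>: "\<delta> > 0"
  shows "\<bar>(\<integral>z. FF (phi d (l / sqrt (real d)) a z) \<partial>gauss d) - exp (l\<^sup>2 * (x - 1) / 2) * Phi (l / (2 * sqrt x) - l * sqrt x)\<bar>
     \<le> \<delta> + \<delta> / (l * sqrt x) + l ^ 4 / (2 * real d * \<delta>\<^sup>2)"
proof -
  interpret prob_space "gauss d" by (rule prob_gauss)
  define h where "h = l / sqrt (real d)"
  define c where "c = l * sqrt x"
  have c: "c > 0" using l x by (simp add: c_def)
  have s: "innerd d a a > 0" using aa d x by simp
  have hc: "h * sqrt (innerd d a a) = c"
    unfolding h_def c_def aa using d by (simp add: real_sqrt_mult)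
  have h2: "h\<^sup>2 = l\<^sup>2 / real d" unfolding h_def using d by (simp add: power_divide)
  define p where "p z = phi d h a z" for z
  define p0 where "p0 z = h * innerd d a z + l\<^sup>2 / 2" for z
  have pm[measurable]: "p \<in> borel_measurable (gauss d)" unfolding p_def by measurable
  have p0m[measurable]: "p0 \<in> borel_measurable (gauss d)" unfolding p0_def by measurable
  have pdiff: "p z - p0 z = l\<^sup>2 / (2 * real d) * (innerd d z z - real d)" for z
    unfolding p_def p0_def phi_def h2 using d by (simp add: field_simps)
  have E0: "(\<integral>z. FF (p0 z) \<partial>gauss d) = exp (l\<^sup>2 * (x - 1) / 2) * Phi (l / (2 * sqrt x) - l * sqrt x)"
  proof -
    have "(\<integral>z. FF (p0 z) \<partial>gauss d) = (\<integral>z. (\<lambda>t. FF (h * t + l\<^sup>2 / 2)) (innerd d a z) \<partial>gauss d)"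
      unfolding p0_def by simp
    also have "\<dots> = (\<integral>w. FF (h * (sqrt (innerd d a a) * w) + l\<^sup>2 / 2) \<partial>std_normal)"
      by (rule innerd_integral(1)[OF s]) simp
    also have "\<dots> = (\<integral>w. FF (c * w + l\<^sup>2 / 2) \<partial>std_normal)"
      unfolding hc[symmetric] by (simp add: mult.assoc)
    also have "\<dots> = exp (c\<^sup>2 / 2 - l\<^sup>2 / 2) * Phi (l\<^sup>2 / 2 / c - c)"
      by (rule FF_closed[OF c])
    also have "c\<^sup>2 / 2 - l\<^sup>2 / 2 = l\<^sup>2 * (x - 1) / 2"
      unfolding c_def using x by (simp add: power_mult_distrib algebra_simps)
    also have "l\<^sup>2 / 2 / c - c = l / (2 * sqrt x) - l * sqrt x"
      unfolding c_def using x l by (simp add: power2_eq_square field_simps)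
    finally show ?thesis .
  qed
  have P0: "(\<integral>z. indicator {t. \<bar>t\<bar> \<le> \<delta>} (p0 z) \<partial>gauss d) \<le> \<delta> / c"
  proof -
    have "(\<integral>z. indicator {t. \<bar>t\<bar> \<le> \<delta>} (p0 z) \<partial>gauss d)
        = (\<integral>z. (\<lambda>t. indicator {t. \<bar>t\<bar> \<le> \<delta>} (h * t + l\<^sup>2 / 2) :: real) (innerd d a z) \<partial>gauss d)"
      unfolding p0_def by simp
    also have "\<dots> = (\<integral>w. indicator {t. \<bar>t\<bar> \<le> \<delta>} (h * (sqrt (innerd d a a) * w) + l\<^sup>2 / 2) \<partial>std_normal)"
      by (rule innerd_integral(1)[OF s]) simp
    also have "\<dots> = (\<integral>w. indicator {t. \<bar>t\<bar> \<le> \<delta>} (c * w + l\<^sup>2 / 2) \<partial>std_normal)"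
      unfolding hc[symmetric] by (simp add: mult.assoc)
    also have "\<dots> \<le> \<delta> / c" by (rule window_bound[OF c \<delta>])
    finally show ?thesis .
  qed
  have V: "(\<integral>z. (p z - p0 z)\<^sup>2 / \<delta>\<^sup>2 \<partial>gauss d) = l ^ 4 / (2 * real d * \<delta>\<^sup>2)"
    and Vi: "integrable (gauss d) (\<lambda>z. (p z - p0 z)\<^sup>2 / \<delta>\<^sup>2)"
  proof -
    have e: "(p z - p0 z)\<^sup>2 / \<delta>\<^sup>2 = (l\<^sup>2 / (2 * real d))\<^sup>2 / \<delta>\<^sup>2 * (innerd d z z - real d)\<^sup>2" for z
      unfolding pdiff by (simp add: power_mult_distrib power_divide)
    show "integrable (gauss d) (\<lambda>z. (p z - p0 z)\<^sup>2 / \<delta>\<^sup>2)"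
      unfolding e using chi_var(1) by simp
    have "(\<integral>z. (p z - p0 z)\<^sup>2 / \<delta>\<^sup>2 \<partial>gauss d) = (l\<^sup>2 / (2 * real d))\<^sup>2 / \<delta>\<^sup>2 * (2 * real d)"
      unfolding e using chi_var(2) by simp
    also have "\<dots> = l ^ 4 / (2 * real d * \<delta>\<^sup>2)"
      using d \<delta> by (simp add: power2_eq_square field_simps power4_eq_xxxx)
    finally show "(\<integral>z. (p z - p0 z)\<^sup>2 / \<delta>\<^sup>2 \<partial>gauss d) = l ^ 4 / (2 * real d * \<delta>\<^sup>2)" .
  qed
  have iF: "integrable (gauss d) (\<lambda>z. FF (p z))" "integrable (gauss d) (\<lambda>z. FF (p0 z))"
    by (rule integrable_const_bound[where B=1]; use FF_bnd in auto)+
  have iI: "integrable (gauss d) (\<lambda>z. indicator {t. \<bar>t\<bar> \<le> \<delta>} (p0 z) :: real)"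
    by (rule integrable_const_bound[where B=1]) (auto simp: indicator_def)
  have "\<bar>(\<integral>z. FF (p z) \<partial>gauss d) - (\<integral>z. FF (p0 z) \<partial>gauss d)\<bar> = \<bar>\<integral>z. FF (p z) - FF (p0 z) \<partial>gauss d\<bar>"
    using iF by simp
  also have "\<dots> \<le> (\<integral>z. \<bar>FF (p z) - FF (p0 z)\<bar> \<partial>gauss d)"
    by (rule integral_abs_bound)
  also have "\<dots> \<le> (\<integral>z. \<delta> + indicator {t. \<bar>t\<bar> \<le> \<delta>} (p0 z) + (p z - p0 z)\<^sup>2 / \<delta>\<^sup>2 \<partial>gauss d)"
    using iF iI Vi by (intro integral_mono FF_pointwise \<delta>) auto
  also have "\<dots> = \<delta> + (\<integral>z. indicator {t. \<bar>t\<bar> \<le> \<delta>} (p0 z) \<partial>gauss d) + (\<integral>z. (p z - p0 z)\<^sup>2 / \<delta>\<^sup>2 \<partial>gauss d)"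
    using iI Vi by (simp add: prob_space)
  also have "\<dots> \<le> \<delta> + \<delta> / c + l ^ 4 / (2 * real d * \<delta>\<^sup>2)"
    using P0 V by simp
  finally show ?thesis unfolding E0[symmetric] p_def h_def c_def .
qed



lemma prob_unif01: "prob_space unif01"
  unfolding unif01_def by (rule prob_space_uniform_measure) auto

lemma sets_unif01[simp, measurable_cong]: "sets unif01 = sets borel"
  unfolding unif01_def by simp

lemma unif_inner:
  fixes E :: real assumes E: "E > 0"
  shows "(\<integral>u. (if u \<le> E then 1 else 0) \<partial>unif01) = min 1 E"
proof -
  have "(\<integral>u. (if u \<le> E then 1 else 0) \<partial>unif01) = (\<integral>u. indicator {..E} u \<partial>unif01)"
    by (intro Bochner_Integration.integral_cong refl) (auto simp: indicator_def)
  also have "\<dots> = measure unif01 ({..E} \<inter> space unif01)" by simp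
  also have "\<dots> = measure unif01 {..E}" by (simp add: unif01_def)
  also have "\<dots> = measure lborel ({0<..<1} \<inter> {..E}) / measure lborel {0<..<(1::real)}"
    unfolding unif01_def by (rule measure_uniform_measure) auto
  also have "\<dots> = min 1 E"
  proof (cases "E < 1")
    case True
    then have "{0<..<1} \<inter> {..E} = {0<..E}" by auto
    then show ?thesis using True E by simp
  next
    case False
    then have "{0<..<1} \<inter> {..E} = {0<..<(1::real)}" by auto
    then show ?thesis using False by simp
  qed
  finally show ?thesis .
qed

lemma accept_m[measurable]: "(\<lambda>zu. accept d h a zu) \<in> borel_measurable (noise d)"
  unfolding accept_def noise_def by measurable

lemma noise_reduce:
  "(\<integral>zu. h * innerd d b (fst zu) * accept d h a zu \<partial>noise d)
     = (\<integral>z. h * innerd d b z * G0 (phi d h a z) \<partial>gauss d)"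
proof -
  interpret G: prob_space "gauss d" by (rule prob_gauss)
  interpret U: prob_space unif01 by (rule prob_unif01)
  interpret pair_sigma_finite "gauss d" unif01 ..
  define f where "f zu = h * innerd d b (fst zu) * accept d h a zu" for zu
  have inner: "(\<integral>u. f (z, u) \<partial>unif01) = h * innerd d b z * G0 (phi d h a z)" for z
  proof -
    have "(\<integral>u. f (z, u) \<partial>unif01) = h * innerd d b z * (\<integral>u. (if u \<le> exp (- phi d h a z) then 1 else 0) \<partial>unif01)"
      unfolding f_def accept_def phi_def by (simp add: algebra_simps)
    also have "\<dots> = h * innerd d b z * G0 (phi d h a z)"
      by (subst unif_inner) (auto simp: G0_def)
    finally show ?thesis .
  qed
  have inner_abs: "(\<integral>u. norm (f (z, u)) \<partial>unif01) = \<bar>h * innerd d b z\<bar> * G0 (phi d h a z)" for z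
  proof -
    have "(\<integral>u. norm (f (z, u)) \<partial>unif01) = \<bar>h * innerd d b z\<bar> * (\<integral>u. (if u \<le> exp (- phi d h a z) then 1 else 0) \<partial>unif01)"
      unfolding f_def accept_def phi_def by (simp add: algebra_simps abs_mult)
    also have "\<dots> = \<bar>h * innerd d b z\<bar> * G0 (phi d h a z)"
      by (subst unif_inner) (auto simp: G0_def)
    finally show ?thesis .
  qed
  have fm[measurable]: "f \<in> borel_measurable (gauss d \<Otimes>\<^sub>M unif01)"
    unfolding f_def using accept_m[of d h a] unfolding noise_def by measurable
  have ib: "integrable (gauss d) (\<lambda>z. innerd d b z)" by (rule abs_innerd_bound(1))
  have intf: "integrable (gauss d \<Otimes>\<^sub>M unif01) f"
  proof (rule Fubini_integrable[OF fm])
    show "integrable (gauss d) (\<lambda>z. \<integral>u. norm (f (z, u)) \<partial>unif01)"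
      unfolding inner_abs
    proof (rule Bochner_Integration.integrable_bound[where f="\<lambda>z. \<bar>h * innerd d b z\<bar>"])
      show "integrable (gauss d) (\<lambda>z. \<bar>h * innerd d b z\<bar>)" using ib by auto
      show "AE z in gauss d. norm (\<bar>h * innerd d b z\<bar> * G0 (phi d h a z)) \<le> norm \<bar>h * innerd d b z\<bar>"
        using G0_bnd by (auto intro!: AE_I2 simp: abs_mult mult_left_le)
    qed measurable
    show "AE z in gauss d. integrable unif01 (\<lambda>u. f (z, u))"
    proof (rule AE_I2)
      fix z
      show "integrable unif01 (\<lambda>u. f (z, u))"
        by (rule U.integrable_const_bound[where B="\<bar>h * innerd d b z\<bar>"])
           (auto simp: f_def accept_def abs_mult)
    qed
  qed
  have "(\<integral>zu. h * innerd d b (fst zu) * accept d h a zu \<partial>noise d) = integral\<^sup>L (gauss d \<Otimes>\<^sub>M unif01) f"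
    unfolding noise_def f_def ..
  also have "\<dots> = (\<integral>z. (\<integral>u. f (z, u) \<partial>unif01) \<partial>gauss d)"
    by (rule integral_fst'[OF intf, symmetric])
  also have "\<dots> = (\<integral>z. h * innerd d b z * G0 (phi d h a z) \<partial>gauss d)"
    unfolding inner ..
  finally show ?thesis .
qed



lemma innerd_comm: "innerd d a b = innerd d b a"
  unfolding innerd_def by (simp add: mult.commute)

lemma main_bound:
  assumes d: "d > 0" and l: "l > 0" and x: "0 \<le> x" "x \<le> X" and y: "0 \<le> y" "y \<le> Y"
    and v: "\<bar>v\<bar> \<le> sqrt (x * y)"
    and aa: "innerd d a a = real d * x" and bb: "innerd d b b = real d * y" and ab: "innerd d a b = real d * v"
    and \<delta>: "\<delta> > 0"
  shows "\<bar>(\<integral>z. (l / sqrt (real d)) * innerd d b z * G0 (phi d (l / sqrt (real d)) a z) \<partial>gauss d) - limfun l x v\<bar>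
     \<le> l\<^sup>2 * sqrt (X * Y) * \<delta> + l * sqrt Y * \<delta> + l ^ 6 * sqrt (X * Y) / (2 * real d * \<delta>\<^sup>2) + l ^ 3 * sqrt Y / real d"
proof -
  interpret prob_space "gauss d" by (rule prob_gauss)
  define h where "h = l / sqrt (real d)"
  have h: "h > 0" using l d by (simp add: h_def)
  define EF where "EF = (\<integral>z. FF (phi d h a z) \<partial>gauss d)"
  define EB where "EB = (\<integral>z. innerd d b z * FF (phi d h a z) \<partial>gauss d)"
  have hh: "h * h = l\<^sup>2 / real d" unfolding h_def using d by (simp add: power2_eq_square)
  have Q: "(\<integral>z. h * innerd d b z * G0 (phi d h a z) \<partial>gauss d) = - (l\<^sup>2 * v) * EF - h ^ 3 * EB"
  proof -
    have "(\<integral>z. h * innerd d b z * G0 (phi d h a z) \<partial>gauss d) = h * (\<integral>z. innerd d b z * G0 (phi d h a z) \<partial>gauss d)"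
      by (simp add: mult.assoc)
    also have "\<dots> = h * (- (h * innerd d a b) * EF - h\<^sup>2 * EB)"
      unfolding stein_sum[OF h] EF_def EB_def ..
    also have "\<dots> = - ((h * h) * innerd d a b) * EF - h ^ 3 * EB"
      by (simp add: algebra_simps power2_eq_square power3_eq_cube)
    also have "(h * h) * innerd d a b = l\<^sup>2 * v" unfolding hh ab using d by simp
    finally show ?thesis .
  qed
  have EBb: "\<bar>EB\<bar> \<le> sqrt (real d * y)"
  proof -
    have ib: "integrable (gauss d) (\<lambda>z. innerd d b z)" by (rule abs_innerd_bound(1))
    have "\<bar>EB\<bar> \<le> (\<integral>z. \<bar>innerd d b z * FF (phi d h a z)\<bar> \<partial>gauss d)"
      unfolding EB_def by (rule integral_abs_bound)
    also have "\<dots> \<le> (\<integral>z. \<bar>innerd d b z\<bar> \<partial>gauss d)"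
    proof (rule integral_mono)
      show "integrable (gauss d) (\<lambda>z. \<bar>innerd d b z\<bar>)" using ib by auto
      show "integrable (gauss d) (\<lambda>z. \<bar>innerd d b z * FF (phi d h a z)\<bar>)"
        by (rule Bochner_Integration.integrable_bound[where f="\<lambda>z. \<bar>innerd d b z\<bar>"])
           (use ib FF_bnd in \<open>auto intro!: AE_I2 simp: abs_mult mult_left_le\<close>)
      show "\<bar>innerd d b z * FF (phi d h a z)\<bar> \<le> \<bar>innerd d b z\<bar>" for z
        using FF_bnd[of "phi d h a z"] by (simp add: abs_mult mult_left_le)
    qed
    also have "\<dots> \<le> sqrt (innerd d b b)" by (rule abs_innerd_bound(2))
    finally show ?thesis unfolding bb .
  qed
  have R: "\<bar>h ^ 3 * EB\<bar> \<le> l ^ 3 * sqrt Y / real d"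
  proof -
    have "\<bar>h ^ 3 * EB\<bar> = h ^ 3 * \<bar>EB\<bar>" using h by (simp add: abs_mult)
    also have "\<dots> \<le> h ^ 3 * sqrt (real d * y)" using EBb h by (intro mult_left_mono) auto
    also have "h ^ 3 * sqrt (real d * y) = l ^ 3 * sqrt y / real d"
    proof -
      have sd: "sqrt (real d) ^ 3 = real d * sqrt (real d)"
        by (simp add: power3_eq_cube)
      show ?thesis unfolding h_def using d
        by (simp add: power_divide sd real_sqrt_mult field_simps)
    qed
    also have "\<dots> \<le> l ^ 3 * sqrt Y / real d"
      using y l d by (intro divide_right_mono mult_left_mono) auto
    finally show ?thesis .
  qed
  have nn: "0 \<le> l\<^sup>2 * sqrt (X * Y) * \<delta>" "0 \<le> l * sqrt Y * \<delta>" "0 \<le> l ^ 6 * sqrt (X * Y) / (2 * real d * \<delta>\<^sup>2)"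
    using l \<delta> x y by auto
  show ?thesis
  proof (cases "x = 0")
    case True
    then have "v = 0" using v by simp
    then have "limfun l x v = 0" by (simp add: limfun_def)
    then show ?thesis unfolding h_def[symmetric] Q using R nn \<open>v = 0\<close> by simp
  next
    case False
    then have xp: "x > 0" using x by simp
    define E0 where "E0 = exp (l\<^sup>2 * (x - 1) / 2) * Phi (l / (2 * sqrt x) - l * sqrt x)"
    have lim: "limfun l x v = - (l\<^sup>2 * v) * E0" unfolding limfun_def E0_def by (simp add: mult_ac)
    have A: "\<bar>EF - E0\<bar> \<le> \<delta> + \<delta> / (l * sqrt x) + l ^ 4 / (2 * real d * \<delta>\<^sup>2)"
      unfolding EF_def E0_def h_def by (rule FF_approx[OF d l xp aa \<delta>])
    have "\<bar>(\<integral>z. h * innerd d b z * G0 (phi d h a z) \<partial>gauss d) - limfun l x v\<bar>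
        = \<bar>- (l\<^sup>2 * v) * (EF - E0) - h ^ 3 * EB\<bar>" unfolding Q lim by (simp add: algebra_simps)
    also have "\<dots> \<le> l\<^sup>2 * \<bar>v\<bar> * \<bar>EF - E0\<bar> + \<bar>h ^ 3 * EB\<bar>"
      by (rule order_trans[OF abs_triangle_ineq4]) (simp add: abs_mult)
    also have "\<dots> \<le> l\<^sup>2 * \<bar>v\<bar> * (\<delta> + \<delta> / (l * sqrt x) + l ^ 4 / (2 * real d * \<delta>\<^sup>2)) + l ^ 3 * sqrt Y / real d"
      using A R by (intro add_mono mult_left_mono) auto
    also have "l\<^sup>2 * \<bar>v\<bar> * (\<delta> + \<delta> / (l * sqrt x) + l ^ 4 / (2 * real d * \<delta>\<^sup>2))
        = l\<^sup>2 * \<bar>v\<bar> * \<delta> + l * (\<bar>v\<bar> / sqrt x) * \<delta> + l ^ 6 * \<bar>v\<bar> / (2 * real d * \<delta>\<^sup>2)"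
    proof -
      have "l * (l * l ^ 4) = l ^ 6" by (simp add: power_numeral_reduce)
      then show ?thesis using l xp by (simp add: field_simps power2_eq_square)
    qed
    also have "\<dots> \<le> l\<^sup>2 * sqrt (X * Y) * \<delta> + l * sqrt Y * \<delta> + l ^ 6 * sqrt (X * Y) / (2 * real d * \<delta>\<^sup>2)"
    proof -
      have v1: "\<bar>v\<bar> \<le> sqrt (X * Y)"
        using v x y by (meson mult_mono order_trans real_sqrt_le_mono)
      have v2: "\<bar>v\<bar> / sqrt x \<le> sqrt Y"
      proof -
        have "\<bar>v\<bar> \<le> sqrt x * sqrt y" using v by (simp add: real_sqrt_mult)
        then have "\<bar>v\<bar> / sqrt x \<le> sqrt y" using xp by (simp add: divide_le_eq mult.commute)
        also have "sqrt y \<le> sqrt Y" using y by simp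
        finally show ?thesis .
      qed
      show ?thesis
        using v1 v2 l \<delta> d
        by (intro add_mono mult_right_mono mult_left_mono divide_right_mono) auto
    qed
    finally show ?thesis unfolding h_def by linarith
  qed
qed



lemma coupling_fst:
  fixes f :: "(nat \<Rightarrow> real) \<times> real \<Rightarrow> real"
  assumes K: "coupling d K" and f[measurable]: "f \<in> borel_measurable (noise d)"
  shows "(\<integral>w. f (fst w) \<partial>K) = (\<integral>zu. f zu \<partial>noise d)"
proof -
  have sK: "sets K = sets (noise d \<Otimes>\<^sub>M noise d)" and dK: "distr K (noise d) fst = noise d"
    using K unfolding coupling_def by auto
  have m: "fst \<in> measurable K (noise d)"
    unfolding measurable_cong_sets[OF sK refl] by simp
  show ?thesis using integral_distr[OF m f] dK by simp
qed

lemma coupling_snd: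
  fixes f :: "(nat \<Rightarrow> real) \<times> real \<Rightarrow> real"
  assumes K: "coupling d K" and f[measurable]: "f \<in> borel_measurable (noise d)"
  shows "(\<integral>w. f (snd w) \<partial>K) = (\<integral>zu. f zu \<partial>noise d)"
proof -
  have sK: "sets K = sets (noise d \<Otimes>\<^sub>M noise d)" and dK: "distr K (noise d) snd = noise d"
    using K unfolding coupling_def by auto
  have m: "snd \<in> measurable K (noise d)"
    unfolding measurable_cong_sets[OF sK refl] by simp
  show ?thesis using integral_distr[OF m f] dK by simp
qed

lemma integrand_m[measurable]: "(\<lambda>zu. h * innerd d b (fst zu) * accept d h a zu) \<in> borel_measurable (noise d)"
proof -
  have "(\<lambda>zu. innerd d b (fst zu)) \<in> borel_measurable (noise d)"
    unfolding noise_def by measurable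
  then show ?thesis using accept_m by measurable
qed

lemma one_side:
  assumes d: "d > 0" and l: "l > 0" and x: "0 \<le> x" "x \<le> X" and y: "0 \<le> y" "y \<le> Y"
    and v: "\<bar>v\<bar> \<le> sqrt (x * y)"
    and aa: "innerd d a a = real d * x" and bb: "innerd d b b = real d * y" and ab: "innerd d a b = real d * v"
    and \<delta>: "\<delta> > 0"
  shows "\<bar>(\<integral>zu. (l / sqrt (real d)) * innerd d b (fst zu) * accept d (l / sqrt (real d)) a zu \<partial>noise d) - limfun l x v\<bar>
     \<le> (l\<^sup>2 * sqrt (X * Y) + l * (sqrt X + sqrt Y)) * \<delta>
        + (l ^ 6 * sqrt (X * Y) / (2 * \<delta>\<^sup>2) + l ^ 3 * (sqrt X + sqrt Y)) / real d"
proof -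
  have "\<bar>(\<integral>zu. (l / sqrt (real d)) * innerd d b (fst zu) * accept d (l / sqrt (real d)) a zu \<partial>noise d) - limfun l x v\<bar>
     \<le> l\<^sup>2 * sqrt (X * Y) * \<delta> + l * sqrt Y * \<delta> + l ^ 6 * sqrt (X * Y) / (2 * real d * \<delta>\<^sup>2) + l ^ 3 * sqrt Y / real d"
    unfolding noise_reduce by (rule main_bound[OF d l x y v aa bb ab \<delta>])
  also have "\<dots> \<le> (l\<^sup>2 * sqrt (X * Y) + l * (sqrt X + sqrt Y)) * \<delta>
        + (l ^ 6 * sqrt (X * Y) / (2 * \<delta>\<^sup>2) + l ^ 3 * (sqrt X + sqrt Y)) / real d"
  proof -
    have sX: "0 \<le> sqrt X" using x by simp
    have e1: "l ^ 6 * sqrt (X * Y) / (2 * real d * \<delta>\<^sup>2) = (l ^ 6 * sqrt (X * Y) / (2 * \<delta>\<^sup>2)) / real d"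
      by (simp add: field_simps)
    have "l * sqrt Y * \<delta> \<le> l * (sqrt X + sqrt Y) * \<delta>" using sX l \<delta> by (intro mult_right_mono mult_left_mono) auto
    moreover have "l ^ 3 * sqrt Y / real d \<le> l ^ 3 * (sqrt X + sqrt Y) / real d"
      using sX l d by (intro divide_right_mono mult_left_mono) auto
    ultimately show ?thesis unfolding e1 by (simp add: algebra_simps add_divide_distrib)
  qed
  finally show ?thesis .
qed

theorem lemma1:
  fixes l X Y :: real
  assumes "l > 0" and "X > 0" and "Y > 0"
  shows "\<forall>\<epsilon>>0. \<exists>D::nat. \<forall>d\<ge>D. \<forall>x y v a b K.
     (x, y, v) \<in> Sset X Y \<and>
     innerd d a a = real d * x \<and> innerd d b b = real d * y \<and> innerd d a b = real d * v \<and>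
     coupling d K \<longrightarrow>
       \<bar>(\<integral>w. (l / sqrt (real d)) * innerd d b (fst (fst w)) * accept d (l / sqrt (real d)) a (fst w) \<partial>K)
          - limfun l x v\<bar> < \<epsilon> \<and>
       \<bar>(\<integral>w. (l / sqrt (real d)) * innerd d a (fst (snd w)) * accept d (l / sqrt (real d)) b (snd w) \<partial>K)
          - limfun l y v\<bar> < \<epsilon>"
proof (intro allI impI)
  fix \<epsilon> :: real assume \<epsilon>: "\<epsilon> > 0"
  have l: "l > 0" and X: "X > 0" and Y: "Y > 0" using assms by auto
  define A where "A = l\<^sup>2 * sqrt (X * Y) + l * (sqrt X + sqrt Y)"
  have A0: "A \<ge> 0" unfolding A_def using l X Y by auto
  define \<delta> where "\<delta> = \<epsilon> / (4 * (A + 1))"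
  have \<delta>: "\<delta> > 0" unfolding \<delta>_def using \<epsilon> A0 by auto
  have Ad: "A * \<delta> \<le> \<epsilon> / 4"
  proof -
    have "A * \<delta> = \<epsilon> / 4 * (A / (A + 1))" unfolding \<delta>_def using A0 by (simp add: field_simps)
    also have "\<dots> \<le> \<epsilon> / 4 * 1" using A0 \<epsilon> by (intro mult_left_mono) auto
    finally show ?thesis by simp
  qed
  define C where "C = l ^ 6 * sqrt (X * Y) / (2 * \<delta>\<^sup>2) + l ^ 3 * (sqrt X + sqrt Y)"
  have C0: "C \<ge> 0" unfolding C_def using l X Y \<delta> by auto
  define D where "D = nat \<lceil>4 * C / \<epsilon>\<rceil> + 1"
  show "\<exists>D::nat. \<forall>d\<ge>D. \<forall>x y v a b K.
     (x, y, v) \<in> Sset X Y \<and>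
     innerd d a a = real d * x \<and> innerd d b b = real d * y \<and> innerd d a b = real d * v \<and>
     coupling d K \<longrightarrow>
       \<bar>(\<integral>w. (l / sqrt (real d)) * innerd d b (fst (fst w)) * accept d (l / sqrt (real d)) a (fst w) \<partial>K)
          - limfun l x v\<bar> < \<epsilon> \<and>
       \<bar>(\<integral>w. (l / sqrt (real d)) * innerd d a (fst (snd w)) * accept d (l / sqrt (real d)) b (snd w) \<partial>K)
          - limfun l y v\<bar> < \<epsilon>"
  proof (intro exI[of _ D] allI impI)
    fix d :: nat and x y v a b K
    assume dD: "D \<le> d"
    assume H: "(x, y, v) \<in> Sset X Y \<and>
     innerd d a a = real d * x \<and> innerd d b b = real d * y \<and> innerd d a b = real d * v \<and> coupling d K"
    have d: "d > 0" using dD unfolding D_def by simp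
    have Cd: "C / real d < \<epsilon> / 4"
    proof -
      have "4 * C / \<epsilon> \<le> real (nat \<lceil>4 * C / \<epsilon>\<rceil>)" by linarith
      then have "4 * C / \<epsilon> < real d" using dD unfolding D_def by linarith
      then have "4 * C < \<epsilon> * real d" using \<epsilon> by (simp add: divide_less_eq mult.commute)
      then show ?thesis using d by (simp add: divide_less_eq mult.commute)
    qed
    have x: "0 \<le> x" "x \<le> X" and y: "0 \<le> y" "y \<le> Y" and v: "\<bar>v\<bar> \<le> sqrt (x * y)"
      using H unfolding Sset_def by auto
    have v': "\<bar>v\<bar> \<le> sqrt (y * x)" using v by (simp add: mult.commute)
    have aa: "innerd d a a = real d * x" and bb: "innerd d b b = real d * y" and ab: "innerd d a b = real d * v"
      and K: "coupling d K" using H by auto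
    have ba: "innerd d b a = real d * v" using ab by (simp add: innerd_comm)
    have b1: "\<bar>(\<integral>zu. (l / sqrt (real d)) * innerd d b (fst zu) * accept d (l / sqrt (real d)) a zu \<partial>noise d) - limfun l x v\<bar>
        \<le> A * \<delta> + C / real d"
      using one_side[OF d l x y v aa bb ab \<delta>] unfolding A_def C_def .
    have b2: "\<bar>(\<integral>zu. (l / sqrt (real d)) * innerd d a (fst zu) * accept d (l / sqrt (real d)) b zu \<partial>noise d) - limfun l y v\<bar>
        \<le> A * \<delta> + C / real d"
      using one_side[OF d l y x v' bb aa ba \<delta>] unfolding A_def C_def by (simp add: mult.commute add.commute)
    have I1: "(\<integral>w. (l / sqrt (real d)) * innerd d b (fst (fst w)) * accept d (l / sqrt (real d)) a (fst w) \<partial>K)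
        = (\<integral>zu. (l / sqrt (real d)) * innerd d b (fst zu) * accept d (l / sqrt (real d)) a zu \<partial>noise d)"
      by (rule coupling_fst[OF K]) measurable
    have I2: "(\<integral>w. (l / sqrt (real d)) * innerd d a (fst (snd w)) * accept d (l / sqrt (real d)) b (snd w) \<partial>K)
        = (\<integral>zu. (l / sqrt (real d)) * innerd d a (fst zu) * accept d (l / sqrt (real d)) b zu \<partial>noise d)"
      by (rule coupling_snd[OF K]) measurable
    show "\<bar>(\<integral>w. (l / sqrt (real d)) * innerd d b (fst (fst w)) * accept d (l / sqrt (real d)) a (fst w) \<partial>K)
          - limfun l x v\<bar> < \<epsilon> \<and>
       \<bar>(\<integral>w. (l / sqrt (real d)) * innerd d a (fst (snd w)) * accept d (l / sqrt (real d)) b (snd w) \<partial>K)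
          - limfun l y v\<bar> < \<epsilon>"
      unfolding I1 I2 using b1 b2 Ad Cd \<epsilon> by linarith
  qed
qed

end
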